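(* Assume (A1)–(A4) from the context. Let $T\ge 1$, and let the step sizes $\alpha,\beta>0$ satisfy $$0<\alpha(\rho+L)+4\alpha^2L^2\le \tfrac12 \qquad\text{and}\qquad 192(6+\delta)\beta^2K^2L^2\le 1,\qquad \text{where } \delta=\frac{1}{(1-\alpha\rho)^2}.$$ Then the iterates $z^0,\dots,z^{T-1}$ generated by FedCanon satisfy $$\frac{1}{T}\sum_{t=0}^{T-1}\mathbb{E}\Vert G^{\alpha}(z^{t})\Vert^2\le \frac{8\left[\phi(z^0)-\phi^*+\alpha\mathcal{E}^0\right]}{\alpha T}+\frac{50\sigma^2}{BK}+\frac{\sigma^2}{8B}+B_h .$$
   Context: Let $N,d,K,B$ be positive integers and $[N]=\{1,\dots,N\}$. For each client $i\in[N]$ let $f_i(x)=\mathbb{E}_{\xi\sim\mathcal{D}_i}[F_i(x;\xi)]$. Let $f=\frac1N\sum_{i=1}^N f_i$, let $h:\mathbb{R}^d\to\mathbb{R}\cup\{+\infty\}$, and let $\phi=f+h$. No similarity between the distributions $\mathcal{D}_i$ is assumed. Standing assumptions: (A1) $\phi^*:=\inf_z\phi(z)>-\infty$. (A2) There is $L>0$ such that for every $i$ and all $x,y$: $f_i(x)-f_i(y)-\langle\nabla f_i(y),x-y\rangle\le \frac L2\Vert x-y\Vert^2$ and $\Vert\nabla f_i(x)-\nabla f_i(y)\Vert\le L\Vert x-y\Vert$. (A3) $h$ is proper, closed and $\rho$-weakly convex for some $\rho\ge0$, i.e. $h(z)+\frac{\rho}{2}\Vert z\Vert^2$ is convex; it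 need not be smooth. There is a constant $B_h$ such that $\Vert h'(z)\Vert^2\le B_h$ for every $z$ and every subgradient $h'(z)\in\partial h(z)$. (A4) Whenever client $i$ evaluates a stochastic gradient $g_i(x)$, it draws $B$ fresh samples $\xi_{i,1},\dots,\xi_{i,B}\sim\mathcal{D}_i$, independent of everything drawn before, and sets $g_i(x)=\frac1B\sum_{b=1}^B\nabla F_i(x;\xi_{i,b})$. Conditionally on the past, $\mathbb{E}[g_i(x)]=\nabla f_i(x)$ and $\mathbb{E}\Vert g_i(x)-\nabla f_i(x)\Vert^2\le\sigma^2/B$. Proximal operator: $\mathbf{prox}_{\alpha h}\{y\}=\arg\min_x\{h(x)+\frac{1}{2\alpha}\Vert x-y\Vert^2\}$. Algorithm FedCanon. The inputs are step sizes $\alpha,\beta>0$, an initial point $z^0\in\mathbb{R}^d$, and control variables $c_i^0\in\mathbb{R}^d$ with $\sum_{i}c_i^0=\mathbf{0}_d$. For $t=0,1,\dots$: - every client $i$ sets $\hat x_i^{t,0}=z^t$; - for $k=0,\dots,K-1$ it updates $\hat x_i^{t,k+1}=\hat x_i^{t,k}-\beta[g_i(\hat x_i^{t,k})+c_i^t]$; - it forms $\Delta_i^{t+1}=\frac{1}{\beta K}(z^t-\hat x_i^{t,K})$; - the server computes $\bar\Delta^{t+1}=\frac1N\sum_i\Delta_i^{t+1}$ and $z^{t+1}=\mathbf{prox}_{\alpha h}\{z^t-\alpha\bar\Delta^{t+1}\}$; - every client updates $c_i^{t+1}=c_i^t+\bar\Delta^{t+1}-\Delta_i^{t+1}$. (The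 variant FedCanon II, in which every client applies the prox step locally starting from a common initialization, generates the same sequence.) Notation: - $G^{\alpha}(z,u)=\frac1\alpha\left(z-\mathbf{prox}_{\alpha h}\{z-\alpha u\}\right)$, and the proximal gradient is $G^\alpha(z)=G^\alpha(z,\nabla f(z))$. - $v_i^t=\frac1K\sum_{k=0}^{K-1}g_i(\hat x_i^{t,k})$ and $\bar v^t=\frac1N\sum_i v_i^t$. - $\mathcal{E}^t=\frac1N\sum_{i=1}^N\mathbb{E}\Vert\nabla f_i(z^t)+c_i^t-\nabla f(z^t)\Vert^2$. For $t\ge1$ this equals $\frac1N\sum_i\mathbb{E}\Vert\nabla f_i(\hat x_i^{t,0})-v_i^{t-1}-\nabla f(z^t)+\bar v^{t-1}\Vert^2$, since $c_i^t=\bar v^{t-1}-v_i^{t-1}$. - $\mathbb{E}$ denotes expectation over all sampling. *)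

theory Defs
  imports "HOL-Probability.Probability"
begin

definition proper_fun :: "('a \<Rightarrow> ereal) \<Rightarrow> bool" where
  "proper_fun h \<longleftrightarrow> (\<forall>x. h x \<noteq> -\<infinity>) \<and> (\<exists>x. h x \<noteq> \<infinity>)"

definition closed_fun :: "('a::topological_space \<Rightarrow> ereal) \<Rightarrow> bool" where
  "closed_fun h \<longleftrightarrow> closed {(x, r::real). h x \<le> ereal r}"

text \<open>Convexity of an extended-real-valued function (ereal arithmetic, 0 * \<infinity> = 0).\<close>
definition ereal_convex :: "('a::real_vector \<Rightarrow> ereal) \<Rightarrow> bool" where
  "ereal_convex g \<longleftrightarrow>
     (\<forall>x y u. 0 \<le> u \<and> u \<le> 1 \<longrightarrow>
        g ((1 - u) *\<^sub>R x + u *\<^sub>R y) \<le> ereal (1 - u) * g x + ereal u * g y)"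

definition weakly_convex :: "real \<Rightarrow> ('a::real_normed_vector \<Rightarrow> ereal) \<Rightarrow> bool" where
  "weakly_convex \<rho> h \<longleftrightarrow> ereal_convex (\<lambda>z. h z + ereal (\<rho> / 2 * (norm z)\<^sup>2))"

definition subdiff :: "('a::real_inner \<Rightarrow> ereal) \<Rightarrow> 'a \<Rightarrow> 'a set" where
  "subdiff h z = {v. \<bar>h z\<bar> \<noteq> \<infinity> \<and>
      (\<forall>\<epsilon>>0. \<exists>\<delta>>0. \<forall>y. norm (y - z) < \<delta> \<longrightarrow>
          h z + ereal (inner v (y - z) - \<epsilon> * norm (y - z)) \<le> h y)}"

text \<open>Proximal operator: a minimizer of h(x) + ||x - y||^2/(2 alpha)
  (unique under the step-size conditions of the theorem).\<close>
definition prox :: "('a::real_normed_vector \<Rightarrow> ereal) \<Rightarrow> real \<Rightarrow> 'a \<Rightarrow> 'a" where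
  "prox h \<alpha> y = (SOME x. \<forall>w. h x + ereal ((norm (x - y))\<^sup>2 / (2 * \<alpha>))
                              \<le> h w + ereal ((norm (w - y))\<^sup>2 / (2 * \<alpha>)))"

text \<open>G^alpha(z,u) and the proximal gradient G^alpha(z) = G^alpha(z, grad f(z)).\<close>
definition Gmap :: "('a::real_normed_vector \<Rightarrow> ereal) \<Rightarrow> real \<Rightarrow> 'a \<Rightarrow> 'a \<Rightarrow> 'a" where
  "Gmap h \<alpha> z u = (1 / \<alpha>) *\<^sub>R (z - prox h \<alpha> (z - \<alpha> *\<^sub>R u))"

fun local_iter :: "(nat \<Rightarrow> 'a \<Rightarrow> 'a) \<Rightarrow> real \<Rightarrow> 'a \<Rightarrow> 'a \<Rightarrow> nat \<Rightarrow> 'a::real_vector" where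
  "local_iter g \<beta> c z 0 = z"
| "local_iter g \<beta> c z (Suc k) = local_iter g \<beta> c z k - \<beta> *\<^sub>R (g k (local_iter g \<beta> c z k) + c)"

definition mb_grad :: "(nat \<Rightarrow> 'a \<Rightarrow> 'b \<Rightarrow> 'a::real_vector) \<Rightarrow> nat
    \<Rightarrow> (nat \<Rightarrow> nat \<Rightarrow> nat \<Rightarrow> nat \<Rightarrow> 'b) \<Rightarrow> nat \<Rightarrow> nat \<Rightarrow> nat \<Rightarrow> 'a \<Rightarrow> 'a" where
  "mb_grad gF B s t i k x = (1 / real B) *\<^sub>R (\<Sum>b<B. gF i x (s t i k b))"

text \<open>State (z^t, c^t) of FedCanon after t rounds, for a given realisation s of all samples.
  Clients are indexed by 0..<N.\<close>
primrec fedcanon :: "(nat \<Rightarrow> 'a \<Rightarrow> 'b \<Rightarrow> 'a::real_normed_vector) \<Rightarrow> ('a \<Rightarrow> ereal)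
    \<Rightarrow> nat \<Rightarrow> nat \<Rightarrow> nat \<Rightarrow> real \<Rightarrow> real \<Rightarrow> 'a \<Rightarrow> (nat \<Rightarrow> 'a)
    \<Rightarrow> (nat \<Rightarrow> nat \<Rightarrow> nat \<Rightarrow> nat \<Rightarrow> 'b) \<Rightarrow> nat \<Rightarrow> 'a \<times> (nat \<Rightarrow> 'a)" where
  "fedcanon gF h N K B \<alpha> \<beta> z0 c0 s 0 = (z0, c0)"
| "fedcanon gF h N K B \<alpha> \<beta> z0 c0 s (Suc t) =
     (let z = fst (fedcanon gF h N K B \<alpha> \<beta> z0 c0 s t);
          c = snd (fedcanon gF h N K B \<alpha> \<beta> z0 c0 s t);
          \<Delta> = (\<lambda>i. (1 / (\<beta> * real K)) *\<^sub>R
                  (z - local_iter (mb_grad gF B s t i) \<beta> (c i) z K));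
          \<Delta>bar = (1 / real N) *\<^sub>R (\<Sum>i<N. \<Delta> i)
      in (prox h \<alpha> (z - \<alpha> *\<^sub>R \<Delta>bar), \<lambda>i. c i + \<Delta>bar - \<Delta> i))"

end

theory Submission
  imports Defs
begin


lemma ereal_add_le_iff: "(e::ereal) + ereal a \<le> ereal b \<longleftrightarrow> e \<le> ereal (b - a)"
  by (cases e) auto

lemma quad_bound_aux:
  fixes n C G \<kappa> r :: real
  assumes "\<kappa> > 0" "n \<ge> 0" "C - G * n + \<kappa> * n\<^sup>2 \<le> r"
  shows "n \<le> (\<bar>G\<bar> + \<bar>C - r\<bar>) / \<kappa> + 1"
proof (rule ccontr)
  assume "\<not> ?thesis"
  hence n: "n > (\<bar>G\<bar> + \<bar>C - r\<bar>) / \<kappa> + 1" by simp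
  hence "\<kappa> * n > \<bar>G\<bar> + \<bar>C - r\<bar> + \<kappa>" using assms(1) by (simp add: field_simps)
  hence a: "\<kappa> * n - G > \<bar>C - r\<bar>" using abs_ge_self[of G] assms(1) by (smt (verit))
  have n1: "n \<ge> 1" using n assms(1) by (smt (verit) divide_nonneg_pos abs_ge_zero)
  have "n * (\<kappa> * n - G) \<ge> 1 * (\<kappa> * n - G)"
    using n1 a by (intro mult_right_mono) auto
  hence "\<kappa> * n\<^sup>2 - G * n > r - C" using a by (simp add: power2_eq_square algebra_simps)
  thus False using assms(3) by linarith
qed

lemma quad_lower:
  fixes n C G \<kappa> :: real
  assumes "\<kappa> > 0"
  shows "C - G * n + \<kappa> * n\<^sup>2 \<ge> C - G\<^sup>2 / (4 * \<kappa>)"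
proof -
  have "0 \<le> (2 * \<kappa> * n - G)\<^sup>2" by simp
  hence "0 \<le> 4 * \<kappa>\<^sup>2 * n\<^sup>2 - 4 * \<kappa> * G * n + G\<^sup>2" by (simp add: power2_eq_square algebra_simps)
  hence "G\<^sup>2 / (4 * \<kappa>) \<ge> G * n - \<kappa> * n\<^sup>2"
    using assms by (simp add: field_simps power2_eq_square)
  thus ?thesis by linarith
qed

lemma prox_exists:
  fixes h :: "'a::euclidean_space \<Rightarrow> ereal"
  assumes hp: "proper_fun h" and hc: "closed_fun h" and \<alpha>: "\<alpha> > 0" and \<kappa>: "\<kappa> > 0"
    and lb: "\<And>x. h x + ereal ((norm (x - y))\<^sup>2 / (2 * \<alpha>)) \<ge> ereal (C - G * norm (x - y) + \<kappa> * (norm (x - y))\<^sup>2)"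
  shows "\<exists>p. \<forall>w. h p + ereal ((norm (p - y))\<^sup>2 / (2 * \<alpha>)) \<le> h w + ereal ((norm (w - y))\<^sup>2 / (2 * \<alpha>))"
proof -
  define q where "q x = (norm (x - y))\<^sup>2 / (2 * \<alpha>)" for x
  define \<psi> where "\<psi> x = h x + ereal (q x)" for x
  define m where "m = Inf (range \<psi>)"
  have lb2: "\<psi> x \<ge> ereal (C - G\<^sup>2 / (4 * \<kappa>))" for x
  proof -
    have "ereal (C - G\<^sup>2 / (4 * \<kappa>)) \<le> ereal (C - G * norm (x - y) + \<kappa> * (norm (x - y))\<^sup>2)"
      using quad_lower[OF \<kappa>, of C G "norm (x - y)"] by simp
    thus ?thesis using lb[of x] unfolding \<psi>_def q_def by (rule order_trans)
  qed
  have mlb: "m \<ge> ereal (C - G\<^sup>2 / (4 * \<kappa>))" unfolding m_def using lb2 by (auto intro: Inf_greatest)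
  obtain x0 where x0: "h x0 \<noteq> \<infinity>" using hp unfolding proper_fun_def by auto
  have "h x0 \<noteq> -\<infinity>" using hp unfolding proper_fun_def by auto
  hence "\<psi> x0 < \<infinity>" using x0 unfolding \<psi>_def by (cases "h x0") auto
  moreover have "m \<le> \<psi> x0" unfolding m_def by (rule INF_lower) simp
  ultimately have "m < \<infinity>" by (rule le_less_trans[rotated])
  then obtain mr where mr: "m = ereal mr" using mlb by (cases m) auto
  define F where "F n = {x. \<psi> x \<le> ereal (mr + 1 / Suc n)}" for n :: nat
  have closedF: "closed (F n)" for n
  proof -
    have Fe: "F n = (\<lambda>x. (x, mr + 1 / Suc n - q x)) -` {(x, r::real). h x \<le> ereal r}"
      unfolding F_def \<psi>_def by (auto simp: ereal_add_le_iff)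
    have ct: "continuous_on UNIV (\<lambda>x. (x, mr + 1 / Suc n - q x))"
      using \<alpha> unfolding q_def by (intro continuous_on_Pair continuous_on_id continuous_on_diff continuous_on_const continuous_on_divide continuous_on_power continuous_on_norm) simp_all
    have ce: "closed {(x, r::real). h x \<le> ereal r}" using hc unfolding closed_fun_def by simp
    show ?thesis unfolding Fe by (rule closed_vimage[OF ce ct])
  qed
  have boundedF: "bounded (F n)" for n
  proof -
    define R where "R = (\<bar>G\<bar> + \<bar>C - (mr + 1 / Suc n)\<bar>) / \<kappa> + 1"
    have "F n \<subseteq> cball y R"
    proof
      fix x assume "x \<in> F n"
      hence "ereal (C - G * norm (x - y) + \<kappa> * (norm (x - y))\<^sup>2) \<le> ereal (mr + 1 / Suc n)"
      proof -
        have "h x + ereal ((norm (x - y))\<^sup>2 / (2 * \<alpha>)) \<le> ereal (mr + 1 / Suc n)"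
          using \<open>x \<in> F n\<close> unfolding F_def \<psi>_def q_def by simp
        from order_trans[OF lb[of x] this] show ?thesis .
      qed
      hence "norm (x - y) \<le> R" unfolding R_def by (intro quad_bound_aux[OF \<kappa>]) auto
      thus "x \<in> cball y R" by (simp add: dist_norm norm_minus_commute)
    qed
    thus ?thesis using bounded_cball bounded_subset by blast
  qed
  have neF: "F n \<noteq> {}" for n
  proof -
    have "m < ereal (mr + 1 / Suc n)" using mr by simp
    then obtain x where "\<psi> x < ereal (mr + 1 / Suc n)" unfolding m_def by (auto simp: Inf_less_iff)
    thus ?thesis unfolding F_def by (auto intro!: exI[of _ x])
  qed
  have monoF: "m1 \<le> n \<Longrightarrow> F n \<subseteq> F m1" for m1 n
  proof
    fix x assume "m1 \<le> n" "x \<in> F n"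
    moreover have "1 / real (Suc n) \<le> 1 / real (Suc m1)" using \<open>m1 \<le> n\<close> by (simp add: frac_le)
    ultimately have "\<psi> x \<le> ereal (mr + 1 / Suc m1)" unfolding F_def
      using order_trans[of "\<psi> x" "ereal (mr + 1 / Suc n)" "ereal (mr + 1 / Suc m1)"] unfolding F_def by simp
    thus "x \<in> F m1" unfolding F_def by simp
  qed
  obtain p where p: "p \<in> \<Inter>(range F)"
  proof -
    have "compact (F n)" for n using closedF boundedF by (simp add: compact_eq_bounded_closed)
    hence "\<Inter>(range F) \<noteq> {}" using compact_nest[of F] neF monoF by blast
    thus ?thesis using that by blast
  qed
  have "\<psi> p \<le> m"
  proof -
    have le: "\<psi> p \<le> ereal (mr + 1 / Suc n)" for n using p unfolding F_def by auto
    have "\<psi> p \<noteq> \<infinity>" using le[of 0] by auto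
    moreover have "\<psi> p \<noteq> -\<infinity>" using lb2[of p] by auto
    ultimately obtain pr where pr: "\<psi> p = ereal pr" by (cases "\<psi> p") auto
    have "pr \<le> mr"
    proof (rule ccontr)
      assume "\<not> pr \<le> mr"
      then obtain n :: nat where n: "n > 0" "inverse (real n) < pr - mr"
        using ex_inverse_of_nat_less[of "pr - mr"] by auto
      have "1 / real (Suc n) \<le> inverse (real n)" using n(1) by (simp add: field_simps)
      moreover have "pr \<le> mr + 1 / Suc n" using le[of n] pr by simp
      ultimately show False using n(2) by linarith
    qed
    thus ?thesis using pr mr by simp
  qed
  hence "\<forall>w. \<psi> p \<le> \<psi> w" unfolding m_def by (metis INF_lower UNIV_I order_trans)
  thus ?thesis unfolding \<psi>_def q_def by blast
qed

lemma norm_convex_comb_sq: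
  fixes a b :: "'a::real_inner"
  shows "(norm ((1 - u) *\<^sub>R a + u *\<^sub>R b))\<^sup>2 = (1 - u) * (norm a)\<^sup>2 + u * (norm b)\<^sup>2 - u * (1 - u) * (norm (a - b))\<^sup>2"
  by (simp only: power2_norm_eq_inner) (simp add: inner_add_left inner_add_right inner_diff_left inner_diff_right inner_commute algebra_simps)

lemma norm_four_identity:
  fixes p1 p2 y1 y2 :: "'a::real_inner"
  shows "(norm (p2 - y1))\<^sup>2 - (norm (p1 - y1))\<^sup>2 + (norm (p1 - y2))\<^sup>2 - (norm (p2 - y2))\<^sup>2 = 2 * inner (p1 - p2) (y1 - y2)"
  by (simp add: power2_norm_eq_inner inner_diff_left inner_diff_right inner_commute algebra_simps)

lemma norm_sq_shift:
  fixes z p y :: "'a::real_inner"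
  shows "(norm (z - y))\<^sup>2 = (norm (p - y))\<^sup>2 + 2 * inner (p - y) (z - p) + (norm (z - p))\<^sup>2"
  by (simp add: power2_norm_eq_inner inner_diff_left inner_diff_right inner_commute algebra_simps)

lemma small_eps_le:
  fixes a b c :: real
  assumes "c \<ge> 0" "\<And>u. 0 < u \<Longrightarrow> u < 1 \<Longrightarrow> a \<le> b + u * c"
  shows "a \<le> b"
proof (rule ccontr)
  assume "\<not> a \<le> b"
  hence d: "a - b > 0" by simp
  define u where "u = min (1/2) ((a - b) / (2 * c + 1))"
  have u: "0 < u" "u < 1" using d assms(1) unfolding u_def by auto
  have "u * c \<le> (a - b) / (2 * c + 1) * c" using assms(1) unfolding u_def by (intro mult_right_mono) auto
  also have "\<dots> < a - b"
  proof -
    have "c / (2 * c + 1) < 1" using assms(1) by simp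
    hence "(a - b) * (c / (2 * c + 1)) < (a - b) * 1" using d by (intro mult_strict_left_mono) auto
    thus ?thesis by simp
  qed
  finally show False using assms(2)[OF u] by linarith
qed

lemma gen_step: "(X::real) \<le> (1 - u) * X + u * Y - m / 2 * u * (1 - u) * D \<Longrightarrow> u * X \<le> u * (Y - m / 2 * D + u * (m / 2 * D))"
  by (simp add: algebra_simps diff_divide_distrib)

locale proxsetup =
  fixes h :: "'a::euclidean_space \<Rightarrow> ereal" and \<rho> \<alpha> Lf m :: real
    and F0 :: "'a \<Rightarrow> real" and gF0 :: "'a \<Rightarrow> 'a"
  assumes hp: "proper_fun h" and hc: "closed_fun h" and hw: "weakly_convex \<rho> h"
    and \<alpha>: "\<alpha> > 0" and \<rho>: "\<rho> \<ge> 0" and \<alpha>\<rho>: "\<alpha> * \<rho> < 1"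
    and Lf: "Lf \<ge> 0" and \<alpha>Lf: "\<alpha> * Lf < 1"
    and hlow: "\<And>x. h x \<ge> ereal (m - F0 x)"
    and F0up: "\<And>x y. F0 x \<le> F0 y + inner (gF0 y) (x - y) + Lf / 2 * (norm (x - y))\<^sup>2"
begin

lemma h_not_minf: "h x \<noteq> -\<infinity>"
  using hp unfolding proper_fun_def by auto

lemma prox_min: "h (prox h \<alpha> y) + ereal ((norm (prox h \<alpha> y - y))\<^sup>2 / (2 * \<alpha>)) \<le> h w + ereal ((norm (w - y))\<^sup>2 / (2 * \<alpha>))"
proof -
  define \<kappa> where "\<kappa> = 1 / (2 * \<alpha>) - Lf / 2"
  have \<kappa>: "\<kappa> > 0" using \<alpha> \<alpha>Lf unfolding \<kappa>_def by (simp add: field_simps)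
  have lb: "h x + ereal ((norm (x - y))\<^sup>2 / (2 * \<alpha>)) \<ge> ereal ((m - F0 y) - norm (gF0 y) * norm (x - y) + \<kappa> * (norm (x - y))\<^sup>2)" for x
  proof -
    have "inner (gF0 y) (x - y) \<le> norm (gF0 y) * norm (x - y)" by (rule norm_cauchy_schwarz)
    hence "(m - F0 y) - norm (gF0 y) * norm (x - y) + \<kappa> * (norm (x - y))\<^sup>2 \<le> (m - F0 x) + (norm (x - y))\<^sup>2 / (2 * \<alpha>)"
      using F0up[of x y] unfolding \<kappa>_def by (simp add: algebra_simps)
    hence "ereal ((m - F0 y) - norm (gF0 y) * norm (x - y) + \<kappa> * (norm (x - y))\<^sup>2) \<le> ereal (m - F0 x) + ereal ((norm (x - y))\<^sup>2 / (2 * \<alpha>))"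
      by simp
    also have "\<dots> \<le> h x + ereal ((norm (x - y))\<^sup>2 / (2 * \<alpha>))" using hlow[of x] by (rule add_right_mono)
    finally show ?thesis .
  qed
  obtain p where p: "\<forall>w. h p + ereal ((norm (p - y))\<^sup>2 / (2 * \<alpha>)) \<le> h w + ereal ((norm (w - y))\<^sup>2 / (2 * \<alpha>))"
    using prox_exists[OF hp hc \<alpha> \<kappa> lb] by blast
  show ?thesis unfolding prox_def by (rule someI2[where a = p]) (use p in auto)
qed

lemma prox_fin: "\<bar>h (prox h \<alpha> y)\<bar> \<noteq> \<infinity>"
proof -
  obtain x0 where x0: "h x0 \<noteq> \<infinity>" using hp unfolding proper_fun_def by auto
  have "h (prox h \<alpha> y) + ereal ((norm (prox h \<alpha> y - y))\<^sup>2 / (2 * \<alpha>)) \<le> h x0 + ereal ((norm (x0 - y))\<^sup>2 / (2 * \<alpha>))"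
    by (rule prox_min)
  moreover have "h x0 + ereal ((norm (x0 - y))\<^sup>2 / (2 * \<alpha>)) < \<infinity>" using x0 by simp
  ultimately have "h (prox h \<alpha> y) \<noteq> \<infinity>" by auto
  thus ?thesis using h_not_minf by auto
qed

lemma prox_strong:
  assumes "h w = ereal hw'" "h (prox h \<alpha> y) = ereal hp'"
  shows "hp' + (norm (prox h \<alpha> y - y))\<^sup>2 / (2 * \<alpha>) + (1 / \<alpha> - \<rho>) / 2 * (norm (w - prox h \<alpha> y))\<^sup>2
         \<le> hw' + (norm (w - y))\<^sup>2 / (2 * \<alpha>)"
proof -
  define p where "p = prox h \<alpha> y"
  define D where "D = (norm (w - p))\<^sup>2"
  define \<mu> where "\<mu> = 1 / \<alpha> - \<rho>"
  have \<mu>: "\<mu> \<ge> 0" using \<alpha> \<alpha>\<rho> unfolding \<mu>_def by (simp add: field_simps)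
  have hp': "h p = ereal hp'" using assms unfolding p_def by simp
  have key: "hp' + (norm (p - y))\<^sup>2 / (2 * \<alpha>) \<le> hw' + (norm (w - y))\<^sup>2 / (2 * \<alpha>) - \<mu> / 2 * D + u * (\<mu> / 2 * D)"
    if u: "0 < u" "u < 1" for u
  proof -
    define xu where "xu = (1 - u) *\<^sub>R p + u *\<^sub>R w"
    have cv: "h xu + ereal (\<rho> / 2 * (norm xu)\<^sup>2) \<le> ereal (1 - u) * (h p + ereal (\<rho> / 2 * (norm p)\<^sup>2)) + ereal u * (h w + ereal (\<rho> / 2 * (norm w)\<^sup>2))"
      using hw u unfolding weakly_convex_def ereal_convex_def xu_def by auto
    hence "h xu + ereal (\<rho> / 2 * (norm xu)\<^sup>2) \<le> ereal ((1 - u) * (hp' + \<rho> / 2 * (norm p)\<^sup>2) + u * (hw' + \<rho> / 2 * (norm w)\<^sup>2))"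
      using hp' assms(1) by simp
    hence hxu: "h xu \<le> ereal ((1 - u) * (hp' + \<rho> / 2 * (norm p)\<^sup>2) + u * (hw' + \<rho> / 2 * (norm w)\<^sup>2) - \<rho> / 2 * (norm xu)\<^sup>2)"
      by (simp add: ereal_add_le_iff)
    have "h p + ereal ((norm (p - y))\<^sup>2 / (2 * \<alpha>)) \<le> h xu + ereal ((norm (xu - y))\<^sup>2 / (2 * \<alpha>))"
      unfolding p_def by (rule prox_min)
    also have "\<dots> \<le> ereal ((1 - u) * (hp' + \<rho> / 2 * (norm p)\<^sup>2) + u * (hw' + \<rho> / 2 * (norm w)\<^sup>2) - \<rho> / 2 * (norm xu)\<^sup>2) + ereal ((norm (xu - y))\<^sup>2 / (2 * \<alpha>))"
      using hxu by (rule add_right_mono)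
    finally have A: "hp' + (norm (p - y))\<^sup>2 / (2 * \<alpha>) \<le> (1 - u) * (hp' + \<rho> / 2 * (norm p)\<^sup>2) + u * (hw' + \<rho> / 2 * (norm w)\<^sup>2) - \<rho> / 2 * (norm xu)\<^sup>2 + (norm (xu - y))\<^sup>2 / (2 * \<alpha>)"
      using hp' by simp
    have n1: "(norm xu)\<^sup>2 = (1 - u) * (norm p)\<^sup>2 + u * (norm w)\<^sup>2 - u * (1 - u) * D"
      unfolding xu_def D_def by (simp add: norm_convex_comb_sq norm_minus_commute)
    have "xu - y = (1 - u) *\<^sub>R (p - y) + u *\<^sub>R (w - y)" unfolding xu_def by (simp add: algebra_simps)
    hence n2: "(norm (xu - y))\<^sup>2 = (1 - u) * (norm (p - y))\<^sup>2 + u * (norm (w - y))\<^sup>2 - u * (1 - u) * D"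
      unfolding D_def by (simp add: norm_convex_comb_sq norm_minus_commute)
    have "hp' + (norm (p - y))\<^sup>2 / (2 * \<alpha>) \<le> (1 - u) * (hp' + (norm (p - y))\<^sup>2 / (2 * \<alpha>)) + u * (hw' + (norm (w - y))\<^sup>2 / (2 * \<alpha>)) - \<mu> / 2 * u * (1 - u) * D"
    proof -
      have E: "(1 - u) * (hp' + \<rho> / 2 * (norm p)\<^sup>2) + u * (hw' + \<rho> / 2 * (norm w)\<^sup>2) - \<rho> / 2 * ((1 - u) * (norm p)\<^sup>2 + u * (norm w)\<^sup>2 - u * (1 - u) * D)
        + ((1 - u) * (norm (p - y))\<^sup>2 + u * (norm (w - y))\<^sup>2 - u * (1 - u) * D) / (2 * \<alpha>)
        = (1 - u) * (hp' + (norm (p - y))\<^sup>2 / (2 * \<alpha>)) + u * (hw' + (norm (w - y))\<^sup>2 / (2 * \<alpha>)) - \<mu> / 2 * u * (1 - u) * D"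
        unfolding \<mu>_def using \<alpha> by (simp add: field_simps)
      show ?thesis using A unfolding n1 n2 E .
    qed
    hence "u * (hp' + (norm (p - y))\<^sup>2 / (2 * \<alpha>)) \<le> u * (hw' + (norm (w - y))\<^sup>2 / (2 * \<alpha>) - \<mu> / 2 * D + u * (\<mu> / 2 * D))"
      by (rule gen_step)
    thus ?thesis using u by simp
  qed
  have "hp' + (norm (p - y))\<^sup>2 / (2 * \<alpha>) + \<mu> / 2 * D \<le> hw' + (norm (w - y))\<^sup>2 / (2 * \<alpha>)"
    using small_eps_le[of "\<mu> / 2 * D" "hp' + (norm (p - y))\<^sup>2 / (2 * \<alpha>) + \<mu> / 2 * D" "hw' + (norm (w - y))\<^sup>2 / (2 * \<alpha>)"] key \<mu>
    unfolding D_def by (simp add: algebra_simps)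
  thus ?thesis unfolding p_def D_def \<mu>_def .
qed

lemma prox_real: obtains r where "h (prox h \<alpha> y) = ereal r"
  using prox_fin[of y] by (cases "h (prox h \<alpha> y)") auto

lemma prox_lip: "norm (prox h \<alpha> y1 - prox h \<alpha> y2) \<le> norm (y1 - y2) / (1 - \<alpha> * \<rho>)"
proof -
  define p1 where "p1 = prox h \<alpha> y1"
  define p2 where "p2 = prox h \<alpha> y2"
  obtain r1 where r1: "h p1 = ereal r1" unfolding p1_def by (rule prox_real)
  obtain r2 where r2: "h p2 = ereal r2" unfolding p2_def by (rule prox_real)
  define \<mu> where "\<mu> = 1 / \<alpha> - \<rho>"
  have \<mu>: "\<mu> > 0" using \<alpha> \<alpha>\<rho> unfolding \<mu>_def by (simp add: field_simps)
  have A: "r1 + (norm (p1 - y1))\<^sup>2 / (2 * \<alpha>) + \<mu> / 2 * (norm (p2 - p1))\<^sup>2 \<le> r2 + (norm (p2 - y1))\<^sup>2 / (2 * \<alpha>)"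
    using prox_strong[of p2 r2 y1 r1] r1 r2 unfolding p1_def p2_def \<mu>_def by simp
  have B: "r2 + (norm (p2 - y2))\<^sup>2 / (2 * \<alpha>) + \<mu> / 2 * (norm (p1 - p2))\<^sup>2 \<le> r1 + (norm (p1 - y2))\<^sup>2 / (2 * \<alpha>)"
    using prox_strong[of p1 r1 y2 r2] r1 r2 unfolding p1_def p2_def \<mu>_def by simp
  have "\<mu> * (norm (p1 - p2))\<^sup>2 \<le> ((norm (p2 - y1))\<^sup>2 - (norm (p1 - y1))\<^sup>2 + (norm (p1 - y2))\<^sup>2 - (norm (p2 - y2))\<^sup>2) / (2 * \<alpha>)"
    using A B by (simp add: norm_minus_commute diff_divide_distrib add_divide_distrib)
  also have "\<dots> = inner (p1 - p2) (y1 - y2) / \<alpha>" unfolding norm_four_identity by simp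
  also have "\<dots> \<le> norm (p1 - p2) * norm (y1 - y2) / \<alpha>"
    using \<alpha> by (simp add: divide_right_mono norm_cauchy_schwarz)
  finally have C: "\<mu> * (norm (p1 - p2))\<^sup>2 \<le> norm (p1 - p2) * norm (y1 - y2) / \<alpha>" .
  show ?thesis
  proof (cases "norm (p1 - p2) = 0")
    case True thus ?thesis using \<alpha> \<alpha>\<rho> unfolding p1_def p2_def by simp
  next
    case False
    hence pos: "norm (p1 - p2) > 0" by simp
    have "\<mu> * norm (p1 - p2) * norm (p1 - p2) \<le> (norm (y1 - y2) / \<alpha>) * norm (p1 - p2)"
      using C by (simp add: power2_eq_square algebra_simps)
    hence "\<mu> * norm (p1 - p2) \<le> norm (y1 - y2) / \<alpha>" using pos by (rule mult_right_le_imp_le)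
    hence "(\<mu> * norm (p1 - p2)) / \<mu> \<le> norm (y1 - y2) / \<alpha> / \<mu>" using \<mu> by (intro divide_right_mono) auto
    hence "norm (p1 - p2) \<le> norm (y1 - y2) / \<alpha> / \<mu>" using \<mu> by simp
    also have "norm (y1 - y2) / \<alpha> / \<mu> = norm (y1 - y2) / (1 - \<alpha> * \<rho>)"
      unfolding \<mu>_def using \<alpha> by (simp add: field_simps)
    finally show ?thesis unfolding p1_def p2_def .
  qed
qed

lemma prox_subdiff: "(1 / \<alpha>) *\<^sub>R (y - prox h \<alpha> y) \<in> subdiff h (prox h \<alpha> y)"
proof -
  define p where "p = prox h \<alpha> y"
  define v where "v = (1 / \<alpha>) *\<^sub>R (y - p)"
  obtain r where r: "h p = ereal r" unfolding p_def by (rule prox_real)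
  have key: "h p + ereal (inner v (z - p) - \<epsilon> * norm (z - p)) \<le> h z" if e: "\<epsilon> > 0" "norm (z - p) < 2 * \<alpha> * \<epsilon>" for \<epsilon> z
  proof (cases "h z")
    case (real rz)
    have m: "h p + ereal ((norm (p - y))\<^sup>2 / (2 * \<alpha>)) \<le> h z + ereal ((norm (z - y))\<^sup>2 / (2 * \<alpha>))"
      unfolding p_def by (rule prox_min)
    hence m': "r + (norm (p - y))\<^sup>2 / (2 * \<alpha>) \<le> rz + (norm (z - y))\<^sup>2 / (2 * \<alpha>)" using r real by simp
    have vv: "v = (- 1 / \<alpha>) *\<^sub>R (p - y)" unfolding v_def by (simp add: algebra_simps)
    have iv: "inner v (z - p) = - inner (p - y) (z - p) / \<alpha>" unfolding vv by simp
    have "(norm (z - y))\<^sup>2 / (2 * \<alpha>) = ((norm (p - y))\<^sup>2 + 2 * inner (p - y) (z - p) + (norm (z - p))\<^sup>2) / (2 * \<alpha>)"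
      by (simp only: norm_sq_shift[of z y p])
    also have "\<dots> = (norm (p - y))\<^sup>2 / (2 * \<alpha>) + inner (p - y) (z - p) / \<alpha> + (norm (z - p))\<^sup>2 / (2 * \<alpha>)"
      using \<alpha> by (simp add: add_divide_distrib)
    finally have "(norm (z - y))\<^sup>2 / (2 * \<alpha>) = (norm (p - y))\<^sup>2 / (2 * \<alpha>) - inner v (z - p) + (norm (z - p))\<^sup>2 / (2 * \<alpha>)"
      unfolding iv by simp
    hence m2: "r + inner v (z - p) - (norm (z - p))\<^sup>2 / (2 * \<alpha>) \<le> rz" using m' by linarith
    have "(norm (z - p))\<^sup>2 / (2 * \<alpha>) = norm (z - p) * (norm (z - p) / (2 * \<alpha>))" by (simp add: power2_eq_square)
    also have "\<dots> \<le> norm (z - p) * \<epsilon>"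
    proof (intro mult_left_mono)
      show "norm (z - p) / (2 * \<alpha>) \<le> \<epsilon>" using e(2) \<alpha> by (simp add: divide_le_eq mult.commute)
    qed simp
    finally have "r + (inner v (z - p) - \<epsilon> * norm (z - p)) \<le> rz" using m2 by (simp add: algebra_simps)
    thus ?thesis using r real by simp
  qed (use h_not_minf in auto)
  have "\<forall>\<epsilon>>0. \<exists>\<delta>>0. \<forall>z. norm (z - p) < \<delta> \<longrightarrow> h p + ereal (inner v (z - p) - \<epsilon> * norm (z - p)) \<le> h z"
  proof (intro allI impI)
    fix \<epsilon> :: real assume "\<epsilon> > 0"
    moreover have "2 * \<alpha> * \<epsilon> > 0" using \<alpha> \<open>\<epsilon> > 0\<close> by simp
    ultimately show "\<exists>\<delta>>0. \<forall>z. norm (z - p) < \<delta> \<longrightarrow> h p + ereal (inner v (z - p) - \<epsilon> * norm (z - p)) \<le> h z"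
      using key by auto
  qed
  moreover have "\<bar>h p\<bar> \<noteq> \<infinity>" using r by simp
  ultimately show ?thesis unfolding subdiff_def v_def p_def by simp
qed

end


lemma local_iter_sum:
  "local_iter g \<beta> c z k = z - \<beta> *\<^sub>R (\<Sum>j<k. g j (local_iter g \<beta> c z j) + c)"
  by (induction k) (auto simp: algebra_simps)

lemma norm_sum_sq_le:
  fixes y :: "nat \<Rightarrow> 'a::real_normed_vector"
  shows "(norm (\<Sum>j\<in>A. y j))\<^sup>2 \<le> real (card A) * (\<Sum>j\<in>A. (norm (y j))\<^sup>2)"
proof -
  have "norm (\<Sum>j\<in>A. y j) \<le> (\<Sum>j\<in>A. norm (y j))" by (rule norm_sum)
  hence "(norm (\<Sum>j\<in>A. y j))\<^sup>2 \<le> (\<Sum>j\<in>A. norm (y j))\<^sup>2" by (simp add: power_mono)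
  also have "\<dots> \<le> (\<Sum>j\<in>A. (norm (y j))\<^sup>2) * real (card A)" by (rule sum_squared_le_sum_of_squares)
  finally show ?thesis by (simp add: mult.commute)
qed

lemma norm_avg_sq_le:
  fixes y :: "nat \<Rightarrow> 'a::real_normed_vector"
  assumes "n > 0"
  shows "(norm ((1 / real n) *\<^sub>R (\<Sum>j<n. y j)))\<^sup>2 \<le> (1 / real n) * (\<Sum>j<n. (norm (y j))\<^sup>2)"
proof -
  have "(norm ((1 / real n) *\<^sub>R (\<Sum>j<n. y j)))\<^sup>2 = (1 / real n)\<^sup>2 * (norm (\<Sum>j<n. y j))\<^sup>2"
    by (simp add: power_divide)
  also have "\<dots> \<le> (1 / real n)\<^sup>2 * (real n * (\<Sum>j<n. (norm (y j))\<^sup>2))"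
    using norm_sum_sq_le[of y "{..<n}"] by (intro mult_left_mono) auto
  also have "\<dots> = (1 / real n) * (\<Sum>j<n. (norm (y j))\<^sup>2)" using assms by (simp add: power2_eq_square)
  finally show ?thesis .
qed

lemma norm_add_sq2: "(norm ((a::'a::real_inner) + b))\<^sup>2 \<le> 2 * (norm a)\<^sup>2 + 2 * (norm b)\<^sup>2"
proof -
  have "(norm (a + b))\<^sup>2 \<le> (norm a + norm b)\<^sup>2" by (simp add: norm_triangle_ineq power_mono)
  also have "\<dots> \<le> 2 * (norm a)\<^sup>2 + 2 * (norm b)\<^sup>2"
  proof -
    have "0 \<le> (norm a - norm b)\<^sup>2" by simp
    thus ?thesis by (simp add: power2_eq_square algebra_simps)
  qed
  finally show ?thesis .
qed

lemma norm_add_sq3: "(norm ((a::'a::real_inner) + b + c))\<^sup>2 \<le> 3 * ((norm a)\<^sup>2 + (norm b)\<^sup>2 + (norm c)\<^sup>2)"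
proof -
  have t: "norm (a + b + c) \<le> norm a + norm b + norm c"
    using norm_triangle_ineq[of "a + b" c] norm_triangle_ineq[of a b] by linarith
  have "(norm (a + b + c))\<^sup>2 \<le> (norm a + norm b + norm c)\<^sup>2"
    using t by (intro power_mono) auto
  also have "\<dots> \<le> 3 * ((norm a)\<^sup>2 + (norm b)\<^sup>2 + (norm c)\<^sup>2)"
  proof -
    have "0 \<le> (norm a - norm b)\<^sup>2 + (norm b - norm c)\<^sup>2 + (norm a - norm c)\<^sup>2" by simp
    thus ?thesis by (simp add: power2_eq_square algebra_simps)
  qed
  finally show ?thesis .
qed

lemma norm_add_sq4: "(norm ((a::'a::real_inner) + b + c + d))\<^sup>2 \<le> 4 * ((norm a)\<^sup>2 + (norm b)\<^sup>2 + (norm c)\<^sup>2 + (norm d)\<^sup>2)"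
proof -
  have "(norm (a + b + c + d))\<^sup>2 \<le> 2 * (norm (a + b))\<^sup>2 + 2 * (norm (c + d))\<^sup>2"
    using norm_add_sq2[of "a + b" "c + d"] by (simp add: add.assoc)
  moreover have "4 * ((norm a)\<^sup>2 + (norm b)\<^sup>2 + (norm c)\<^sup>2 + (norm d)\<^sup>2) = 4 * (norm a)\<^sup>2 + 4 * (norm b)\<^sup>2 + 4 * (norm c)\<^sup>2 + 4 * (norm d)\<^sup>2"
    by simp
  ultimately show ?thesis using norm_add_sq2[of a b] norm_add_sq2[of c d] by linarith
qed

lemma variance_le:
  fixes X :: "nat \<Rightarrow> 'a::real_inner"
  assumes "n > 0"
  shows "(1 / real n) * (\<Sum>i<n. (norm (X i - (1 / real n) *\<^sub>R (\<Sum>j<n. X j)))\<^sup>2) \<le> (1 / real n) * (\<Sum>i<n. (norm (X i))\<^sup>2)"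
proof -
  define m where "m = (1 / real n) *\<^sub>R (\<Sum>j<n. X j)"
  have sm: "(\<Sum>j<n. X j) = real n *\<^sub>R m" unfolding m_def using assms by simp
  have "(\<Sum>i<n. (norm (X i - m))\<^sup>2) = (\<Sum>i<n. (norm (X i))\<^sup>2 - 2 * inner (X i) m + (norm m)\<^sup>2)"
    by (intro sum.cong refl) (simp add: power2_norm_eq_inner inner_diff_left inner_diff_right inner_commute)
  also have "\<dots> = (\<Sum>i<n. (norm (X i))\<^sup>2) - 2 * inner (\<Sum>i<n. X i) m + real n * (norm m)\<^sup>2"
    by (simp add: sum.distrib sum_subtractf inner_sum_left sum_distrib_left)
  also have "\<dots> = (\<Sum>i<n. (norm (X i))\<^sup>2) - real n * (norm m)\<^sup>2"
    unfolding sm by (simp add: power2_norm_eq_inner)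
  finally have "(\<Sum>i<n. (norm (X i - m))\<^sup>2) \<le> (\<Sum>i<n. (norm (X i))\<^sup>2)" by simp
  thus ?thesis unfolding m_def by (intro mult_left_mono) auto
qed

lemma absorb_lemma:
  fixes Q c Y :: real
  assumes "Q \<ge> 0" "Y \<ge> 0" "0 \<le> c" "c \<le> 1 / 336" "Q \<le> c * Q + c * Y"
  shows "Q \<le> Y / 300"
proof -
  have "c * Q \<le> (1 / 336) * Q" using assms by (intro mult_right_mono) auto
  moreover have "c * Y \<le> (1 / 336) * Y" using assms by (intro mult_right_mono) auto
  ultimately show ?thesis using assms by linarith
qed

locale fedpath = proxsetup h \<rho> \<alpha> L m F0 gF0
  for h :: "'a::euclidean_space \<Rightarrow> ereal" and \<rho> \<alpha> L m F0 gF0 +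
  fixes N K B :: nat and f :: "nat \<Rightarrow> 'a \<Rightarrow> real" and gf :: "nat \<Rightarrow> 'a \<Rightarrow> 'a"
    and gF :: "nat \<Rightarrow> 'a \<Rightarrow> 'b \<Rightarrow> 'a" and \<beta> Bh :: real and z0 :: 'a and c0 :: "nat \<Rightarrow> 'a"
    and s :: "nat \<Rightarrow> nat \<Rightarrow> nat \<Rightarrow> nat \<Rightarrow> 'b"
  assumes F0_def: "F0 = (\<lambda>x. (1 / real N) * (\<Sum>i<N. f i x))"
    and gF0_def: "gF0 = (\<lambda>x. (1 / real N) *\<^sub>R (\<Sum>i<N. gf i x))"
    and N: "N > 0" and K: "K > 0" and B: "B > 0" and \<beta>: "\<beta> > 0" and L: "L > 0"
    and upper: "\<And>i x y. i < N \<Longrightarrow> f i x - f i y - inner (gf i y) (x - y) \<le> L / 2 * (norm (x - y))\<^sup>2"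
    and lip: "\<And>i x y. i < N \<Longrightarrow> norm (gf i x - gf i y) \<le> L * norm (x - y)"
    and Bh: "\<And>z v. v \<in> subdiff h z \<Longrightarrow> (norm v)\<^sup>2 \<le> Bh"
    and step2: "\<alpha> * (\<rho> + L) + 4 * \<alpha>\<^sup>2 * L\<^sup>2 \<le> 1 / 2"
    and step3: "1344 * \<beta>\<^sup>2 * (real K)\<^sup>2 * L\<^sup>2 \<le> 1"
    and c0sum: "(\<Sum>i<N. c0 i) = 0"
begin

definition "zz t = fst (fedcanon gF h N K B \<alpha> \<beta> z0 c0 s t)"
definition "cc t = snd (fedcanon gF h N K B \<alpha> \<beta> z0 c0 s t)"
definition "xl t i k = local_iter (mb_grad gF B s t i) \<beta> (cc t i) (zz t) k"
definition "gg t i k = mb_grad gF B s t i k (xl t i k)"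
definition "ee t i k = gg t i k - gf i (xl t i k)"
definition "MM t i k = (\<Sum>j<k. ee t i j)"
definition "vv t i = (1 / real K) *\<^sub>R (\<Sum>k<K. gg t i k)"
definition "vbar t = (1 / real N) *\<^sub>R (\<Sum>i<N. vv t i)"

lemma zz0: "zz 0 = z0" and cc0: "cc 0 = c0" unfolding zz_def cc_def by simp_all

lemma xl_sum: "xl t i k = zz t - \<beta> *\<^sub>R (\<Sum>j<k. gg t i j + cc t i)"
  unfolding xl_def gg_def by (rule local_iter_sum)

lemma step_raw:
  "zz (Suc t) = prox h \<alpha> (zz t - \<alpha> *\<^sub>R (vbar t + (1 / real N) *\<^sub>R (\<Sum>i<N. cc t i)))"
  "cc (Suc t) i = cc t i + (vbar t + (1 / real N) *\<^sub>R (\<Sum>i<N. cc t i)) - (vv t i + cc t i)"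
proof -
  have D: "(1 / (\<beta> * real K)) *\<^sub>R (zz t - local_iter (mb_grad gF B s t i) \<beta> (cc t i) (zz t) K) = vv t i + cc t i" for i
  proof -
    have "zz t - local_iter (mb_grad gF B s t i) \<beta> (cc t i) (zz t) K = \<beta> *\<^sub>R ((\<Sum>j<K. gg t i j) + real K *\<^sub>R cc t i)"
      using xl_sum[of t i K] unfolding xl_def by (simp add: sum.distrib sum_constant_scaleR)
    hence "(1 / (\<beta> * real K)) *\<^sub>R (zz t - local_iter (mb_grad gF B s t i) \<beta> (cc t i) (zz t) K)
       = (1 / (\<beta> * real K)) *\<^sub>R (\<beta> *\<^sub>R ((\<Sum>j<K. gg t i j) + real K *\<^sub>R cc t i))" by simp
    also have "\<dots> = (1 / real K) *\<^sub>R (\<Sum>j<K. gg t i j) + cc t i"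
      using \<beta> K by (simp add: scaleR_add_right)
    finally show ?thesis unfolding vv_def .
  qed
  have Db: "(1 / real N) *\<^sub>R (\<Sum>i<N. (1 / (\<beta> * real K)) *\<^sub>R (zz t - local_iter (mb_grad gF B s t i) \<beta> (cc t i) (zz t) K))
     = vbar t + (1 / real N) *\<^sub>R (\<Sum>i<N. cc t i)"
    unfolding D vbar_def by (simp add: sum.distrib algebra_simps)
  have fc: "fedcanon gF h N K B \<alpha> \<beta> z0 c0 s (Suc t) =
    (prox h \<alpha> (zz t - \<alpha> *\<^sub>R ((1 / real N) *\<^sub>R (\<Sum>i<N. (1 / (\<beta> * real K)) *\<^sub>R (zz t - local_iter (mb_grad gF B s t i) \<beta> (cc t i) (zz t) K)))),
     \<lambda>i. cc t i + (1 / real N) *\<^sub>R (\<Sum>i<N. (1 / (\<beta> * real K)) *\<^sub>R (zz t - local_iter (mb_grad gF B s t i) \<beta> (cc t i) (zz t) K))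
         - (1 / (\<beta> * real K)) *\<^sub>R (zz t - local_iter (mb_grad gF B s t i) \<beta> (cc t i) (zz t) K))"
    by (simp only: fedcanon.simps Let_def zz_def cc_def)
  show "zz (Suc t) = prox h \<alpha> (zz t - \<alpha> *\<^sub>R (vbar t + (1 / real N) *\<^sub>R (\<Sum>i<N. cc t i)))"
    unfolding zz_def[of "Suc t"] fc Db by (simp only: fst_conv zz_def)
  show "cc (Suc t) i = cc t i + (vbar t + (1 / real N) *\<^sub>R (\<Sum>i<N. cc t i)) - (vv t i + cc t i)"
  proof -
    have Db2: "(1 / real N) *\<^sub>R (\<Sum>i<N. vv t i + cc t i) = vbar t + (1 / real N) *\<^sub>R (\<Sum>i<N. cc t i)"
      unfolding vbar_def by (simp add: sum.distrib algebra_simps)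
    show ?thesis unfolding cc_def[of "Suc t"] fc by (simp only: snd_conv D Db2)
  qed
qed

lemma csum: "(\<Sum>i<N. cc t i) = 0"
proof (induction t)
  case 0 thus ?case using c0sum by (simp add: cc0)
next
  case (Suc t)
  have "(\<Sum>i<N. cc (Suc t) i) = (\<Sum>i<N. vbar t - vv t i)"
    by (intro sum.cong refl) (simp add: step_raw(2) Suc)
  also have "\<dots> = real N *\<^sub>R vbar t - (\<Sum>i<N. vv t i)" by (simp add: sum_subtractf sum_constant_scaleR)
  also have "\<dots> = 0" unfolding vbar_def using N by simp
  finally show ?case .
qed

lemma step: "zz (Suc t) = prox h \<alpha> (zz t - \<alpha> *\<^sub>R vbar t)" "cc (Suc t) i = vbar t - vv t i"
  using step_raw(1)[of t] step_raw(2)[of t i] csum[of t] by simp_all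

definition "ww t i = gf i (zz t) + cc t i - gF0 (zz t)"
definition "Ss t i = (\<Sum>k<K. (norm (xl t i k - zz t))\<^sup>2)"

lemma b_small: "4 * (\<beta>\<^sup>2 * (real K)\<^sup>2 * L\<^sup>2) \<le> 1 / 336" using step3 by simp

lemma uk_eq: "zz t - xl t i k = \<beta> *\<^sub>R ((\<Sum>j<k. gf i (xl t i j) - gf i (zz t)) + real k *\<^sub>R (ww t i + gF0 (zz t)) + MM t i k)"
proof -
  have "(\<Sum>j<k. gg t i j + cc t i) = (\<Sum>j<k. (gf i (xl t i j) - gf i (zz t)) + (ww t i + gF0 (zz t)) + ee t i j)"
    by (intro sum.cong refl) (simp add: ee_def ww_def)
  also have "\<dots> = (\<Sum>j<k. gf i (xl t i j) - gf i (zz t)) + real k *\<^sub>R (ww t i + gF0 (zz t)) + MM t i k"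
    unfolding MM_def by (simp add: sum.distrib sum_constant_scaleR scaleR_add_right)
  finally show ?thesis using xl_sum[of t i k] by simp
qed

lemma uk_bound:
  assumes i: "i < N" and k: "k \<le> K"
  shows "(norm (xl t i k - zz t))\<^sup>2 \<le> 4 * \<beta>\<^sup>2 * (real K * L\<^sup>2 * Ss t i + (real K)\<^sup>2 * ((norm (ww t i))\<^sup>2 + (norm (gF0 (zz t)))\<^sup>2) + (norm (MM t i k))\<^sup>2)"
proof -
  define A where "A = (\<Sum>j<k. gf i (xl t i j) - gf i (zz t))"
  have "(norm (A))\<^sup>2 \<le> real k * (\<Sum>j<k. (norm (gf i (xl t i j) - gf i (zz t)))\<^sup>2)"
    unfolding A_def using norm_sum_sq_le[of _ "{..<k}"] by simp
  also have "\<dots> \<le> real K * (\<Sum>j<K. L\<^sup>2 * (norm (xl t i j - zz t))\<^sup>2)"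
  proof (intro mult_mono)
    have "(\<Sum>j<k. (norm (gf i (xl t i j) - gf i (zz t)))\<^sup>2) \<le> (\<Sum>j<k. L\<^sup>2 * (norm (xl t i j - zz t))\<^sup>2)"
    proof (intro sum_mono)
      fix j
      have "norm (gf i (xl t i j) - gf i (zz t)) \<le> L * norm (xl t i j - zz t)" by (rule lip[OF i])
      hence "(norm (gf i (xl t i j) - gf i (zz t)))\<^sup>2 \<le> (L * norm (xl t i j - zz t))\<^sup>2" by (intro power_mono) auto
      thus "(norm (gf i (xl t i j) - gf i (zz t)))\<^sup>2 \<le> L\<^sup>2 * (norm (xl t i j - zz t))\<^sup>2" by (simp add: power_mult_distrib)
    qed
    also have "\<dots> \<le> (\<Sum>j<K. L\<^sup>2 * (norm (xl t i j - zz t))\<^sup>2)"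
      using k by (intro sum_mono2) auto
    finally show "(\<Sum>j<k. (norm (gf i (xl t i j) - gf i (zz t)))\<^sup>2) \<le> (\<Sum>j<K. L\<^sup>2 * (norm (xl t i j - zz t))\<^sup>2)" .
  qed (use k in \<open>auto intro: sum_nonneg\<close>)
  also have "\<dots> = real K * L\<^sup>2 * Ss t i" unfolding Ss_def by (simp add: sum_distrib_left mult.assoc)
  finally have nA: "(norm A)\<^sup>2 \<le> real K * L\<^sup>2 * Ss t i" .
  have kk: "(real k)\<^sup>2 \<le> (real K)\<^sup>2" using k by (simp add: power_mono)
  have "(norm (xl t i k - zz t))\<^sup>2 = (norm (zz t - xl t i k))\<^sup>2" by (simp add: norm_minus_commute)
  also have "\<dots> = \<beta>\<^sup>2 * (norm (A + real k *\<^sub>R ww t i + real k *\<^sub>R gF0 (zz t) + MM t i k))\<^sup>2"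
  proof -
    have V: "A + real k *\<^sub>R (ww t i + gF0 (zz t)) + MM t i k = A + real k *\<^sub>R ww t i + real k *\<^sub>R gF0 (zz t) + MM t i k"
      by (simp add: scaleR_add_right)
    show ?thesis unfolding uk_eq A_def[symmetric] V by (simp add: power_mult_distrib)
  qed
  also have "\<dots> \<le> \<beta>\<^sup>2 * (4 * ((norm A)\<^sup>2 + (norm (real k *\<^sub>R ww t i))\<^sup>2 + (norm (real k *\<^sub>R gF0 (zz t)))\<^sup>2 + (norm (MM t i k))\<^sup>2))"
    by (intro mult_left_mono norm_add_sq4) auto
  also have "\<dots> = 4 * \<beta>\<^sup>2 * ((norm A)\<^sup>2 + (real k)\<^sup>2 * ((norm (ww t i))\<^sup>2 + (norm (gF0 (zz t)))\<^sup>2) + (norm (MM t i k))\<^sup>2)"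
    by (simp add: power_mult_distrib algebra_simps)
  also have "\<dots> \<le> 4 * \<beta>\<^sup>2 * (real K * L\<^sup>2 * Ss t i + (real K)\<^sup>2 * ((norm (ww t i))\<^sup>2 + (norm (gF0 (zz t)))\<^sup>2) + (norm (MM t i k))\<^sup>2)"
    using nA kk by (intro mult_left_mono add_mono mult_right_mono) auto
  finally show ?thesis .
qed

definition "Xt t i = (norm (ww t i))\<^sup>2 + (norm (gF0 (zz t)))\<^sup>2"
definition "Mx t i = (\<Sum>k<K. (norm (MM t i k))\<^sup>2)"

lemma S_bound:
  assumes i: "i < N"
  shows "L\<^sup>2 * Ss t i / real K \<le> (Xt t i + Mx t i / (real K)\<^sup>2) / 300"
proof -
  define b where "b = \<beta>\<^sup>2 * (real K)\<^sup>2 * L\<^sup>2"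
  have b: "0 \<le> 4 * b" "4 * b \<le> 1 / 336" using b_small unfolding b_def by auto
  have "Ss t i = (\<Sum>k<K. (norm (xl t i k - zz t))\<^sup>2)" unfolding Ss_def ..
  also have "\<dots> \<le> (\<Sum>k<K. 4 * \<beta>\<^sup>2 * (real K * L\<^sup>2 * Ss t i + (real K)\<^sup>2 * Xt t i + (norm (MM t i k))\<^sup>2))"
    using uk_bound[OF i] unfolding Xt_def[symmetric] by (intro sum_mono) auto
  also have "\<dots> = 4 * \<beta>\<^sup>2 * ((real K)\<^sup>2 * L\<^sup>2 * Ss t i + (real K)^3 * Xt t i + Mx t i)"
    unfolding Mx_def by (simp add: sum.distrib sum_distrib_left power2_eq_square power3_eq_cube algebra_simps)
  finally have S1: "Ss t i \<le> 4 * \<beta>\<^sup>2 * ((real K)\<^sup>2 * L\<^sup>2 * Ss t i + (real K)^3 * Xt t i + Mx t i)" .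
  have "L\<^sup>2 * Ss t i / real K \<le> L\<^sup>2 / real K * (4 * \<beta>\<^sup>2 * ((real K)\<^sup>2 * L\<^sup>2 * Ss t i + (real K)^3 * Xt t i + Mx t i))"
    using S1 by (simp add: divide_right_mono mult_left_mono)
  also have "\<dots> = 4 * b * (L\<^sup>2 * Ss t i / real K) + 4 * b * Xt t i + 4 * \<beta>\<^sup>2 * L\<^sup>2 * Mx t i / real K"
    unfolding b_def using K by (simp add: field_simps power2_eq_square power3_eq_cube)
  also have "4 * \<beta>\<^sup>2 * L\<^sup>2 * Mx t i / real K \<le> 4 * b * (Mx t i / (real K)\<^sup>2)"
  proof -
    have Mx0: "Mx t i \<ge> 0" unfolding Mx_def by (simp add: sum_nonneg)
    have "4 * \<beta>\<^sup>2 * L\<^sup>2 * Mx t i / real K \<le> 4 * \<beta>\<^sup>2 * L\<^sup>2 * Mx t i"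
    proof -
      have "1 / real K \<le> 1" using K by simp
      hence "(4 * \<beta>\<^sup>2 * L\<^sup>2 * Mx t i) * (1 / real K) \<le> (4 * \<beta>\<^sup>2 * L\<^sup>2 * Mx t i) * 1"
        using Mx0 by (intro mult_left_mono) auto
      thus ?thesis by simp
    qed
    also have "\<dots> = 4 * b * (Mx t i / (real K)\<^sup>2)" unfolding b_def using K by (simp add: field_simps)
    finally show ?thesis .
  qed
  finally have "L\<^sup>2 * Ss t i / real K \<le> 4 * b * (L\<^sup>2 * Ss t i / real K) + 4 * b * (Xt t i + Mx t i / (real K)\<^sup>2)"
    by (simp add: algebra_simps)
  moreover have "L\<^sup>2 * Ss t i / real K \<ge> 0" unfolding Ss_def by (simp add: sum_nonneg)
  moreover have "Xt t i + Mx t i / (real K)\<^sup>2 \<ge> 0" unfolding Xt_def Mx_def by (simp add: sum_nonneg)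
  ultimately show ?thesis using absorb_lemma b by blast
qed

definition "Wt t = (1 / real N) * (\<Sum>i<N. (norm (ww t i))\<^sup>2)"
definition "Rt t = (1 / real N) * (\<Sum>i<N. Mx t i / (real K)\<^sup>2)"
definition "Zt t = (1 / real N) * (\<Sum>i<N. (norm (MM t i K))\<^sup>2 / (real K)\<^sup>2)"
definition "Yt t = (norm (vbar t - gF0 (zz t)))\<^sup>2"
definition "Ft t = (norm (gF0 (zz t)))\<^sup>2"
definition "Dt t = (norm (zz (Suc t) - zz t))\<^sup>2"
definition "Gt t = (norm (Gmap h \<alpha> (zz t) (gF0 (zz t))))\<^sup>2"
definition "ai t i = (1 / real K) *\<^sub>R (\<Sum>k<K. gf i (xl t i k) - gf i (zz t))"
definition "ni t i = (1 / real K) *\<^sub>R MM t i K"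

lemma vv_split: "vv t i = gf i (zz t) + ai t i + ni t i"
proof -
  have "(\<Sum>k<K. gg t i k) = (\<Sum>k<K. gf i (xl t i k) - gf i (zz t)) + real K *\<^sub>R gf i (zz t) + MM t i K"
    unfolding MM_def ee_def by (simp add: sum.distrib sum_subtractf sum_constant_scaleR)
  thus ?thesis unfolding vv_def ai_def ni_def using K by (simp add: scaleR_add_right)
qed

lemma vbar_split: "vbar t - gF0 (zz t) = (1 / real N) *\<^sub>R (\<Sum>i<N. ai t i) + (1 / real N) *\<^sub>R (\<Sum>i<N. ni t i)"
  unfolding vbar_def gF0_def vv_split by (simp add: sum.distrib algebra_simps)

lemma ai_bound: "i < N \<Longrightarrow> (norm (ai t i))\<^sup>2 \<le> L\<^sup>2 * Ss t i / real K"
proof -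
  assume i: "i < N"
  have "(norm (ai t i))\<^sup>2 \<le> (1 / real K) * (\<Sum>k<K. (norm (gf i (xl t i k) - gf i (zz t)))\<^sup>2)"
    unfolding ai_def by (rule norm_avg_sq_le[OF K])
  also have "\<dots> \<le> (1 / real K) * (\<Sum>k<K. L\<^sup>2 * (norm (xl t i k - zz t))\<^sup>2)"
  proof (intro mult_left_mono sum_mono)
    fix k
    have "norm (gf i (xl t i k) - gf i (zz t)) \<le> L * norm (xl t i k - zz t)" by (rule lip[OF i])
    hence "(norm (gf i (xl t i k) - gf i (zz t)))\<^sup>2 \<le> (L * norm (xl t i k - zz t))\<^sup>2" by (intro power_mono) auto
    thus "(norm (gf i (xl t i k) - gf i (zz t)))\<^sup>2 \<le> L\<^sup>2 * (norm (xl t i k - zz t))\<^sup>2" by (simp add: power_mult_distrib)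
  qed simp
  also have "\<dots> = L\<^sup>2 * Ss t i / real K" unfolding Ss_def by (simp add: sum_distrib_left sum_divide_distrib)
  finally show ?thesis .
qed

lemma ai_bound2: "i < N \<Longrightarrow> (norm (ai t i))\<^sup>2 \<le> (Xt t i + Mx t i / (real K)\<^sup>2) / 300"
  by (rule order_trans[OF ai_bound S_bound])

lemma avg_Xt: "(1 / real N) * (\<Sum>i<N. (Xt t i + Mx t i / (real K)\<^sup>2) / 300) = (Wt t + Ft t + Rt t) / 300"
  unfolding Xt_def Wt_def Ft_def Rt_def using N by (simp add: sum.distrib sum_divide_distrib[symmetric] algebra_simps)

lemma a_bound: "(norm ((1 / real N) *\<^sub>R (\<Sum>i<N. ai t i)))\<^sup>2 \<le> (Wt t + Ft t + Rt t) / 300"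
proof -
  have "(norm ((1 / real N) *\<^sub>R (\<Sum>i<N. ai t i)))\<^sup>2 \<le> (1 / real N) * (\<Sum>i<N. (norm (ai t i))\<^sup>2)"
    by (rule norm_avg_sq_le[OF N])
  also have "\<dots> \<le> (1 / real N) * (\<Sum>i<N. (Xt t i + Mx t i / (real K)\<^sup>2) / 300)"
    using ai_bound2 by (intro mult_left_mono sum_mono) auto
  finally show ?thesis unfolding avg_Xt .
qed

lemma ni_sq: "(norm (ni t i))\<^sup>2 = (norm (MM t i K))\<^sup>2 / (real K)\<^sup>2"
  unfolding ni_def by (simp add: power_divide)

lemma n_bound: "(norm ((1 / real N) *\<^sub>R (\<Sum>i<N. ni t i)))\<^sup>2 \<le> Zt t"
  using norm_avg_sq_le[OF N, of "ni t"] unfolding Zt_def ni_sq .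

lemma Y_bound: "Yt t \<le> (Wt t + Ft t + Rt t) / 150 + 2 * Zt t"
proof -
  have "Yt t \<le> 2 * (norm ((1 / real N) *\<^sub>R (\<Sum>i<N. ai t i)))\<^sup>2 + 2 * (norm ((1 / real N) *\<^sub>R (\<Sum>i<N. ni t i)))\<^sup>2"
    unfolding Yt_def vbar_split by (rule norm_add_sq2)
  thus ?thesis using a_bound[of t] n_bound[of t] by linarith
qed

lemma W_bound: "Wt (Suc t) \<le> 3 * L\<^sup>2 * Dt t + (Wt t + Ft t + Rt t) / 100 + 3 * Zt t"
proof -
  define X where "X i = gf i (zz (Suc t)) - vv t i" for i
  have Xbar: "(1 / real N) *\<^sub>R (\<Sum>j<N. X j) = gF0 (zz (Suc t)) - vbar t"
    unfolding X_def gF0_def vbar_def by (simp add: sum_subtractf scaleR_diff_right)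
  have wwX: "ww (Suc t) i = X i - (1 / real N) *\<^sub>R (\<Sum>j<N. X j)" if "i < N" for i
  proof -
    have "X i - (1 / real N) *\<^sub>R (\<Sum>j<N. X j) = X i - (gF0 (zz (Suc t)) - vbar t)" by (simp only: Xbar)
    thus ?thesis unfolding ww_def step(2)[of t i] X_def by (simp add: algebra_simps)
  qed
  have "Wt (Suc t) = (1 / real N) * (\<Sum>i<N. (norm (X i - (1 / real N) *\<^sub>R (\<Sum>j<N. X j)))\<^sup>2)"
    unfolding Wt_def using wwX by simp
  also have "\<dots> \<le> (1 / real N) * (\<Sum>i<N. (norm (X i))\<^sup>2)" by (rule variance_le[OF N])
  also have "\<dots> \<le> (1 / real N) * (\<Sum>i<N. 3 * (L\<^sup>2 * Dt t + (Xt t i + Mx t i / (real K)\<^sup>2) / 300 + (norm (MM t i K))\<^sup>2 / (real K)\<^sup>2))"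
  proof (intro mult_left_mono sum_mono)
    fix i assume "i \<in> {..<N}"
    hence i: "i < N" by simp
    have "X i = (gf i (zz (Suc t)) - gf i (zz t)) + (- ai t i) + (- ni t i)"
      unfolding X_def vv_split by simp
    hence "(norm (X i))\<^sup>2 \<le> 3 * ((norm (gf i (zz (Suc t)) - gf i (zz t)))\<^sup>2 + (norm (ai t i))\<^sup>2 + (norm (ni t i))\<^sup>2)"
      using norm_add_sq3[of "gf i (zz (Suc t)) - gf i (zz t)" "- ai t i" "- ni t i"] by simp
    moreover have "(norm (gf i (zz (Suc t)) - gf i (zz t)))\<^sup>2 \<le> L\<^sup>2 * Dt t"
    proof -
      have "norm (gf i (zz (Suc t)) - gf i (zz t)) \<le> L * norm (zz (Suc t) - zz t)" by (rule lip[OF i])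
      hence "(norm (gf i (zz (Suc t)) - gf i (zz t)))\<^sup>2 \<le> (L * norm (zz (Suc t) - zz t))\<^sup>2" by (intro power_mono) auto
      thus ?thesis unfolding Dt_def by (simp add: power_mult_distrib)
    qed
    moreover note ai_bound2[OF i, of t] ni_sq[of t i]
    ultimately have "3 * ((norm (gf i (zz (Suc t)) - gf i (zz t)))\<^sup>2 + (norm (ai t i))\<^sup>2 + (norm (ni t i))\<^sup>2)
        \<le> 3 * (L\<^sup>2 * Dt t + (Xt t i + Mx t i / (real K)\<^sup>2) / 300 + (norm (MM t i K))\<^sup>2 / (real K)\<^sup>2)"
      by (intro mult_left_mono add_mono) simp_all
    with \<open>(norm (X i))\<^sup>2 \<le> _\<close> show "(norm (X i))\<^sup>2 \<le> 3 * (L\<^sup>2 * Dt t + (Xt t i + Mx t i / (real K)\<^sup>2) / 300 + (norm (MM t i K))\<^sup>2 / (real K)\<^sup>2)"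
      by (rule order_trans)
  qed simp
  also have "\<dots> = 3 * L\<^sup>2 * Dt t + 3 * ((1 / real N) * (\<Sum>i<N. (Xt t i + Mx t i / (real K)\<^sup>2) / 300)) + 3 * Zt t"
    unfolding Zt_def using N by (simp add: sum.distrib sum_distrib_left algebra_simps)
  also have "\<dots> = 3 * L\<^sup>2 * Dt t + (Wt t + Ft t + Rt t) / 100 + 3 * Zt t"
    unfolding avg_Xt by simp
  finally show ?thesis .
qed

lemma \<alpha>\<rho>_half: "\<alpha> * \<rho> \<le> 1 / 2"
proof -
  have "0 \<le> \<alpha> * L" using \<alpha> L by simp
  moreover have "0 \<le> 4 * \<alpha>\<^sup>2 * L\<^sup>2" by simp
  moreover have "\<alpha> * (\<rho> + L) = \<alpha> * \<rho> + \<alpha> * L" by (simp add: algebra_simps)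
  ultimately show ?thesis using step2 by linarith
qed

lemma G_bound: "Gt t \<le> 2 * (Dt t / \<alpha>\<^sup>2) + 8 * Yt t"
proof -
  define p where "p = prox h \<alpha> (zz t - \<alpha> *\<^sub>R gF0 (zz t))"
  have G: "Gmap h \<alpha> (zz t) (gF0 (zz t)) = (1 / \<alpha>) *\<^sub>R (zz t - zz (Suc t)) + (1 / \<alpha>) *\<^sub>R (zz (Suc t) - p)"
    unfolding Gmap_def p_def by (simp add: algebra_simps)
  have "norm (zz (Suc t) - p) \<le> norm ((zz t - \<alpha> *\<^sub>R vbar t) - (zz t - \<alpha> *\<^sub>R gF0 (zz t))) / (1 - \<alpha> * \<rho>)"
    unfolding step(1) p_def by (rule prox_lip)
  also have "\<dots> = \<alpha> * norm (vbar t - gF0 (zz t)) / (1 - \<alpha> * \<rho>)"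
  proof -
    have "(zz t - \<alpha> *\<^sub>R vbar t) - (zz t - \<alpha> *\<^sub>R gF0 (zz t)) = - (\<alpha> *\<^sub>R (vbar t - gF0 (zz t)))"
      by (simp add: algebra_simps)
    thus ?thesis using \<alpha> by simp
  qed
  also have "\<dots> \<le> \<alpha> * norm (vbar t - gF0 (zz t)) / (1 / 2)"
    using \<alpha>\<rho>_half \<alpha> by (intro divide_left_mono) auto
  finally have pb: "norm (zz (Suc t) - p) \<le> 2 * \<alpha> * norm (vbar t - gF0 (zz t))" by simp
  have "Gt t \<le> 2 * (norm ((1 / \<alpha>) *\<^sub>R (zz t - zz (Suc t))))\<^sup>2 + 2 * (norm ((1 / \<alpha>) *\<^sub>R (zz (Suc t) - p)))\<^sup>2"
    unfolding Gt_def G by (rule norm_add_sq2)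
  also have "(norm ((1 / \<alpha>) *\<^sub>R (zz t - zz (Suc t))))\<^sup>2 = Dt t / \<alpha>\<^sup>2"
    unfolding Dt_def using \<alpha> by (simp add: power_divide norm_minus_commute)
  also have "(norm ((1 / \<alpha>) *\<^sub>R (zz (Suc t) - p)))\<^sup>2 \<le> 4 * Yt t"
  proof -
    have "norm ((1 / \<alpha>) *\<^sub>R (zz (Suc t) - p)) = norm (zz (Suc t) - p) / \<alpha>" using \<alpha> by simp
    also have "\<dots> \<le> 2 * \<alpha> * norm (vbar t - gF0 (zz t)) / \<alpha>" using pb \<alpha> by (intro divide_right_mono) auto
    also have "\<dots> = 2 * norm (vbar t - gF0 (zz t))" using \<alpha> by simp
    finally have "(norm ((1 / \<alpha>) *\<^sub>R (zz (Suc t) - p)))\<^sup>2 \<le> (2 * norm (vbar t - gF0 (zz t)))\<^sup>2"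
      by (intro power_mono) auto
    thus ?thesis unfolding Yt_def by (simp add: power_mult_distrib)
  qed
  finally show ?thesis by simp
qed

lemma F_bound: "Ft t \<le> 2 * Gt t + 2 * Bh"
proof -
  define y where "y = zz t - \<alpha> *\<^sub>R gF0 (zz t)"
  define v where "v = (1 / \<alpha>) *\<^sub>R (y - prox h \<alpha> y)"
  have "v \<in> subdiff h (prox h \<alpha> y)" unfolding v_def by (rule prox_subdiff)
  hence vB: "(norm v)\<^sup>2 \<le> Bh" by (rule Bh)
  have "gF0 (zz t) = Gmap h \<alpha> (zz t) (gF0 (zz t)) + (- v)"
    unfolding Gmap_def v_def y_def using \<alpha> by (simp add: algebra_simps)
  hence "Ft t \<le> 2 * (norm (Gmap h \<alpha> (zz t) (gF0 (zz t))))\<^sup>2 + 2 * (norm (- v))\<^sup>2"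
    unfolding Ft_def by (metis norm_add_sq2)
  thus ?thesis using vB unfolding Gt_def by simp
qed

definition "Hr t = real_of_ereal (h (zz t))"
definition "Phi t = F0 (zz t) + Hr t"

lemma h_fin: assumes "h z0 \<noteq> \<infinity>" shows "h (zz t) = ereal (Hr t)"
proof (cases t)
  case 0 thus ?thesis using assms h_not_minf[of z0] by (cases "h z0") (auto simp: Hr_def zz0)
next
  case (Suc t')
  obtain r where "h (prox h \<alpha> (zz t' - \<alpha> *\<^sub>R vbar t')) = ereal r" by (rule prox_real)
  thus ?thesis unfolding Hr_def Suc step(1) by simp
qed

lemma descent:
  assumes h0: "h z0 \<noteq> \<infinity>"
  shows "Phi (Suc t) \<le> Phi t + \<alpha> * Yt t - Dt t / (2 * \<alpha>)"
proof -
  define z where "z = zz t"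
  define zp where "zp = zz (Suc t)"
  define d where "d = zp - z"
  define v where "v = vbar t"
  define g where "g = gF0 z"
  define y where "y = z - \<alpha> *\<^sub>R v"
  define D where "D = (norm d)\<^sup>2"
  define Y where "Y = (norm (v - g))\<^sup>2"
  have zp: "zp = prox h \<alpha> y" unfolding zp_def y_def z_def v_def by (rule step(1))
  have S: "Hr (Suc t) + (norm (zp - y))\<^sup>2 / (2 * \<alpha>) + (1 / \<alpha> - \<rho>) / 2 * (norm (z - zp))\<^sup>2 \<le> Hr t + (norm (z - y))\<^sup>2 / (2 * \<alpha>)"
  proof -
    have hzp: "h (prox h \<alpha> y) = ereal (Hr (Suc t))" using h_fin[OF h0, of "Suc t"] zp unfolding zp_def by simp
    have hz: "h z = ereal (Hr t)" unfolding z_def by (rule h_fin[OF h0])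
    show ?thesis using prox_strong[OF hz hzp] unfolding zp[symmetric] .
  qed
  have e1: "(norm (zp - y))\<^sup>2 = D + 2 * \<alpha> * inner d v + \<alpha>\<^sup>2 * (norm v)\<^sup>2"
  proof -
    have "zp - y = d + \<alpha> *\<^sub>R v" unfolding d_def y_def by simp
    moreover have "(norm (d + \<alpha> *\<^sub>R v))\<^sup>2 = D + 2 * \<alpha> * inner d v + \<alpha>\<^sup>2 * (norm v)\<^sup>2"
      unfolding D_def by (simp only: power2_norm_eq_inner) (simp add: inner_add_left inner_add_right inner_commute algebra_simps power2_eq_square)
    ultimately show ?thesis by simp
  qed
  have e2: "(norm (z - y))\<^sup>2 = \<alpha>\<^sup>2 * (norm v)\<^sup>2" unfolding y_def using \<alpha> by (simp add: power_mult_distrib)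
  have e3: "(norm (z - zp))\<^sup>2 = D" unfolding D_def d_def by (simp add: norm_minus_commute)
  define Da where "Da = D / \<alpha>"
  define V where "V = (norm v)\<^sup>2"
  have e1': "(norm (zp - y))\<^sup>2 / (2 * \<alpha>) = Da / 2 + inner d v + \<alpha> * V / 2"
    unfolding e1 Da_def V_def using \<alpha> by (simp add: field_simps power2_eq_square)
  have e2': "(norm (z - y))\<^sup>2 / (2 * \<alpha>) = \<alpha> * V / 2"
    unfolding e2 V_def using \<alpha> by (simp add: field_simps power2_eq_square)
  have e3': "(1 / \<alpha> - \<rho>) / 2 * (norm (z - zp))\<^sup>2 = Da / 2 - \<rho> * D / 2"
    unfolding e3 Da_def using \<alpha> by (simp add: field_simps)
  have S2: "Hr (Suc t) + Da + inner d v - \<rho> * D / 2 \<le> Hr t" using S unfolding e1' e2' e3' by linarith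
  have F: "F0 zp \<le> F0 z + inner g d + L / 2 * D" unfolding g_def d_def D_def by (rule F0up)
  have young: "- inner d (v - g) \<le> Da / 4 + \<alpha> * Y"
  proof -
    have "0 \<le> (norm (d + (2 * \<alpha>) *\<^sub>R (v - g)))\<^sup>2 / (4 * \<alpha>)" using \<alpha> by simp
    also have "(norm (d + (2 * \<alpha>) *\<^sub>R (v - g)))\<^sup>2 = D + 4 * \<alpha> * inner d (v - g) + 4 * \<alpha>\<^sup>2 * Y"
      unfolding D_def Y_def by (simp only: power2_norm_eq_inner) (simp add: inner_add_left inner_add_right inner_commute algebra_simps power2_eq_square)
    also have "(D + 4 * \<alpha> * inner d (v - g) + 4 * \<alpha>\<^sup>2 * Y) / (4 * \<alpha>) = Da / 4 + inner d (v - g) + \<alpha> * Y"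
      unfolding Da_def using \<alpha> by (simp add: field_simps power2_eq_square)
    finally show ?thesis by simp
  qed
  have idg: "inner d (v - g) = inner d v - inner g d" by (simp add: inner_diff_right inner_commute)
  have aRL: "\<rho> + L \<le> 1 / (2 * \<alpha>)"
  proof -
    have "0 \<le> 4 * \<alpha>\<^sup>2 * L\<^sup>2" by simp
    hence "\<alpha> * (\<rho> + L) \<le> 1 / 2" using step2 by linarith
    thus ?thesis using \<alpha> by (simp add: field_simps)
  qed
  have D0: "D \<ge> 0" unfolding D_def by simp
  have "(\<rho> + L) * D \<le> (1 / (2 * \<alpha>)) * D" using aRL D0 by (rule mult_right_mono)
  also have "(1 / (2 * \<alpha>)) * D = Da / 2" unfolding Da_def by simp
  finally have rl: "\<rho> * D / 2 + L / 2 * D \<le> Da / 4" by (simp add: algebra_simps)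
  have "F0 zp + Hr (Suc t) \<le> F0 z + Hr t + \<alpha> * Y - Da / 2"
    using S2 F young idg rl by linarith
  moreover have "Da / 2 = D / (2 * \<alpha>)" unfolding Da_def by simp
  ultimately have "F0 zp + Hr (Suc t) \<le> F0 z + Hr t + \<alpha> * Y - D / (2 * \<alpha>)" by simp
  thus ?thesis unfolding Phi_def Yt_def Dt_def zp_def z_def D_def Y_def d_def v_def g_def .
qed

lemma Phi_lb: assumes h0: "h z0 \<noteq> \<infinity>" shows "m \<le> Phi t"
proof -
  have "ereal (m - F0 (zz t)) \<le> ereal (Hr t)" using hlow[of "zz t"] h_fin[OF h0, of t] by simp
  thus ?thesis unfolding Phi_def by simp
qed

lemma Bh_nonneg: "Bh \<ge> 0"
proof -
  have "(norm ((1 / \<alpha>) *\<^sub>R (z0 - prox h \<alpha> z0)))\<^sup>2 \<le> Bh" by (rule Bh[OF prox_subdiff])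
  thus ?thesis by (meson order_trans zero_le_power2)
qed

lemma path_bound:
  assumes h0: "h z0 \<noteq> \<infinity>"
  shows "(\<Sum>t<T. Gt t) \<le> 8 * ((Phi 0 - m) / \<alpha>) + 8 * Wt 0 + real T * Bh + (\<Sum>t<T. Rt t) / 8 + 50 * (\<Sum>t<T. Zt t)"
proof -
  define V where "V = (Phi 0 - m) / \<alpha>"
  define P where "P = (\<Sum>t<T. Gt t)"
  define Dn where "Dn = (\<Sum>t<T. Dt t / \<alpha>\<^sup>2)"
  define Ys where "Ys = (\<Sum>t<T. Yt t)"
  define Ws where "Ws = (\<Sum>t<T. Wt t)"
  define Fs where "Fs = (\<Sum>t<T. Ft t)"
  define Rs where "Rs = (\<Sum>t<T. Rt t)"
  define Zs where "Zs = (\<Sum>t<T. Zt t)"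
  have V0: "V \<ge> 0" unfolding V_def using Phi_lb[OF h0, of 0] \<alpha> by simp
  have W0: "Wt 0 \<ge> 0" unfolding Wt_def by (simp add: sum_nonneg)
  have Rs0: "Rs \<ge> 0" unfolding Rs_def Rt_def Mx_def by (intro sum_nonneg) (simp add: sum_nonneg)
  have Zs0: "Zs \<ge> 0" unfolding Zs_def Zt_def by (intro sum_nonneg) (simp add: sum_nonneg)
  have Dn0: "Dn \<ge> 0" unfolding Dn_def Dt_def by (simp add: sum_nonneg)
  have Bh0: "Bh \<ge> 0" by (rule Bh_nonneg)
  have "(\<Sum>t<T. Phi (Suc t) - Phi t) \<le> (\<Sum>t<T. \<alpha> * Yt t - Dt t / (2 * \<alpha>))"
    using descent[OF h0] by (intro sum_mono) (simp add: algebra_simps)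
  hence "Phi T - Phi 0 \<le> \<alpha> * Ys - (\<Sum>t<T. Dt t / (2 * \<alpha>))"
    unfolding Ys_def sum_lessThan_telescope by (simp add: sum_subtractf sum_distrib_left)
  moreover have "(\<Sum>t<T. Dt t / (2 * \<alpha>)) = \<alpha> / 2 * Dn"
    unfolding Dn_def using \<alpha> by (simp add: sum_distrib_left power2_eq_square field_simps)
  ultimately have "\<alpha> / 2 * Dn \<le> \<alpha> * Ys + (Phi 0 - m)" using Phi_lb[OF h0, of T] by linarith
  hence "(2 / \<alpha>) * (\<alpha> / 2 * Dn) \<le> (2 / \<alpha>) * (\<alpha> * Ys + (Phi 0 - m))" using \<alpha> by (intro mult_left_mono) auto
  hence a: "Dn \<le> 2 * V + 2 * Ys" unfolding V_def using \<alpha> by (simp add: field_simps)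
  have b: "P \<le> 2 * Dn + 8 * Ys"
  proof -
    have "P \<le> (\<Sum>t<T. 2 * (Dt t / \<alpha>\<^sup>2) + 8 * Yt t)" unfolding P_def using G_bound by (rule sum_mono)
    thus ?thesis unfolding Dn_def Ys_def by (simp add: sum.distrib sum_distrib_left)
  qed
  have c: "Ys \<le> (Ws + Fs + Rs) / 150 + 2 * Zs"
  proof -
    have "Ys \<le> (\<Sum>t<T. (Wt t + Ft t + Rt t) / 150 + 2 * Zt t)" unfolding Ys_def using Y_bound by (rule sum_mono)
    moreover have "(\<Sum>t<T. (Wt t + Ft t + Rt t) / 150 + 2 * Zt t) = (Ws + Fs + Rs) / 150 + 2 * Zs"
      unfolding Ws_def Fs_def Rs_def Zs_def by (simp add: sum.distrib sum_distrib_left[symmetric] sum_divide_distrib[symmetric])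
    ultimately show ?thesis by simp
  qed
  have d: "Ws \<le> Wt 0 + 3 / 8 * Dn + (Ws + Fs + Rs) / 100 + 3 * Zs"
  proof -
    have "Ws \<le> (\<Sum>t<Suc T. Wt t)" unfolding Ws_def using W0 by (simp add: Wt_def sum_nonneg)
    also have "\<dots> = Wt 0 + (\<Sum>t<T. Wt (Suc t))" by (rule sum.lessThan_Suc_shift)
    also have "(\<Sum>t<T. Wt (Suc t)) \<le> (\<Sum>t<T. 3 * L\<^sup>2 * Dt t + (Wt t + Ft t + Rt t) / 100 + 3 * Zt t)"
      using W_bound by (rule sum_mono)
    also have "\<dots> = 3 * (\<alpha>\<^sup>2 * L\<^sup>2) * Dn + (Ws + Fs + Rs) / 100 + 3 * Zs"
    proof -
      have "(\<Sum>t<T. 3 * L\<^sup>2 * Dt t) = 3 * (\<alpha>\<^sup>2 * L\<^sup>2) * Dn"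
        unfolding Dn_def using \<alpha> by (simp add: sum_distrib_left mult.assoc)
      thus ?thesis unfolding Ws_def Fs_def Rs_def Zs_def
        by (simp add: sum.distrib sum_distrib_left[symmetric] sum_divide_distrib[symmetric])
    qed
    also have "3 * (\<alpha>\<^sup>2 * L\<^sup>2) * Dn \<le> 3 * (1 / 8) * Dn"
    proof -
      have "\<alpha>\<^sup>2 * L\<^sup>2 \<le> 1 / 8"
      proof -
        have "0 \<le> \<alpha> * (\<rho> + L)" using \<alpha> \<rho> L by simp
        thus ?thesis using step2 by linarith
      qed
      thus ?thesis using Dn0 by (intro mult_right_mono) (auto simp: algebra_simps)
    qed
    finally show ?thesis by simp
  qed
  have e: "Fs \<le> 2 * P + 2 * (real T * Bh)"
  proof -
    have "Fs \<le> (\<Sum>t<T. 2 * Gt t + 2 * Bh)" unfolding Fs_def using F_bound by (rule sum_mono)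
    thus ?thesis unfolding P_def by (simp add: sum.distrib sum_distrib_left)
  qed
  have "P \<le> 8 * V + 8 * Wt 0 + real T * Bh + Rs / 8 + 50 * Zs"
  proof -
    define BT where "BT = real T * Bh"
    have BT0: "BT \<ge> 0" unfolding BT_def using Bh0 by simp
    show ?thesis using a b c d e[folded BT_def] V0 W0 Rs0 Zs0 Dn0 BT0 unfolding BT_def[symmetric]
      by (simp only: add_divide_distrib)
  qed
  thus ?thesis unfolding P_def V_def Rs_def Zs_def .
qed

end


lemma inner_abs_le_sq: "\<bar>inner (a::'a::real_inner) b\<bar> \<le> (norm a)\<^sup>2 + (norm b)\<^sup>2"
proof -
  have "\<bar>inner a b\<bar> \<le> norm a * norm b" by (rule Cauchy_Schwarz_ineq2)
  also have "\<dots> \<le> (norm a)\<^sup>2 + (norm b)\<^sup>2"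
  proof -
    have "0 \<le> (norm a - norm b)\<^sup>2" by simp
    hence "2 * (norm a * norm b) \<le> (norm a)\<^sup>2 + (norm b)\<^sup>2" by (simp add: power2_eq_square algebra_simps)
    moreover have "0 \<le> norm a * norm b" by simp
    ultimately show ?thesis by linarith
  qed
  finally show ?thesis .
qed

lemma orth_step:
  fixes Mf :: "'j \<Rightarrow> 'b measure" and I :: "'j set" and q :: 'j
    and F X :: "('j \<Rightarrow> 'b) \<Rightarrow> 'a::euclidean_space" and g :: "'a \<Rightarrow> 'b \<Rightarrow> 'a" and gm :: "'a \<Rightarrow> 'a"
  assumes pps: "\<And>j. prob_space (Mf j)"
    and I: "finite I" "q \<in> I"
    and gmeas: "(\<lambda>(x, y). g x y) \<in> borel_measurable (borel \<Otimes>\<^sub>M Mf q)"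
    and gint: "\<And>x. integrable (Mf q) (g x)"
    and gmean: "\<And>x. (\<integral>y. g x y \<partial>Mf q) = gm x"
    and gvar: "\<And>x. (\<integral>\<^sup>+y. ennreal ((norm (g x y - gm x))\<^sup>2) \<partial>Mf q) \<le> ennreal sig"
    and sig: "sig \<ge> 0"
    and gmmeas: "gm \<in> borel_measurable borel"
    and Fm: "F \<in> borel_measurable (Pi\<^sub>M I Mf)" and Xm: "X \<in> borel_measurable (Pi\<^sub>M I Mf)"
    and Fq: "\<And>s y. F (s(q := y)) = F s" and Xq: "\<And>s y. X (s(q := y)) = X s"
    and Fint: "integrable (Pi\<^sub>M I Mf) (\<lambda>s. (norm (F s))\<^sup>2)"
  shows "integrable (Pi\<^sub>M I Mf) (\<lambda>s. (norm (F s + (g (X s) (s q) - gm (X s))))\<^sup>2)"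
    and "(\<integral>s. (norm (F s + (g (X s) (s q) - gm (X s))))\<^sup>2 \<partial>Pi\<^sub>M I Mf) \<le> (\<integral>s. (norm (F s))\<^sup>2 \<partial>Pi\<^sub>M I Mf) + sig"
proof -
  interpret P: product_prob_space Mf
    by (simp add: product_prob_space_def product_prob_space_axioms_def product_sigma_finite_def pps prob_space_imp_sigma_finite)
  define I' where "I' = I - {q}"
  have II: "insert q I' = I" and qI': "q \<notin> I'" and fI': "finite I'" using I unfolding I'_def by auto
  define e where "e s = g (X s) (s q) - gm (X s)" for s
  have eq: "e (s(q := y)) = g (X s) y - gm (X s)" for s y unfolding e_def Xq by simp
  have [measurable]: "(\<lambda>s. s q) \<in> Pi\<^sub>M I Mf \<rightarrow>\<^sub>M Mf q" using I(2) by (rule measurable_component_singleton)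
  have em: "e \<in> borel_measurable (Pi\<^sub>M I Mf)"
  proof -
    have "(\<lambda>s. (X s, s q)) \<in> Pi\<^sub>M I Mf \<rightarrow>\<^sub>M borel \<Otimes>\<^sub>M Mf q" using Xm by measurable
    hence "(\<lambda>s. (\<lambda>(x, y). g x y) (X s, s q)) \<in> borel_measurable (Pi\<^sub>M I Mf)"
      using gmeas by (rule measurable_compose)
    moreover have "(\<lambda>s. gm (X s)) \<in> borel_measurable (Pi\<^sub>M I Mf)" using Xm gmmeas by (rule measurable_compose)
    ultimately show ?thesis unfolding e_def by simp
  qed
  have eA: "(\<integral>\<^sup>+s. ennreal ((norm (e s))\<^sup>2) \<partial>Pi\<^sub>M I Mf) \<le> ennreal sig"
  proof -
    have "(\<integral>\<^sup>+s. ennreal ((norm (e s))\<^sup>2) \<partial>Pi\<^sub>M I Mf) = (\<integral>\<^sup>+s. ennreal ((norm (e s))\<^sup>2) \<partial>Pi\<^sub>M (insert q I') Mf)"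
      by (simp only: II)
    also have "\<dots> = (\<integral>\<^sup>+s. (\<integral>\<^sup>+y. ennreal ((norm (e (s(q := y))))\<^sup>2) \<partial>Mf q) \<partial>Pi\<^sub>M I' Mf)"
      by (rule P.product_nn_integral_insert[OF fI' qI']) (unfold II, use em in measurable)
    also have "\<dots> \<le> (\<integral>\<^sup>+s. ennreal sig \<partial>Pi\<^sub>M I' Mf)"
      by (intro nn_integral_mono) (simp add: eq gvar)
    also have "\<dots> = ennreal sig"
    proof -
      interpret PP: prob_space "Pi\<^sub>M I' Mf" by (rule prob_space_PiM) (rule pps)
      show ?thesis by (simp add: PP.emeasure_space_1)
    qed
    finally show ?thesis .
  qed
  have eint: "integrable (Pi\<^sub>M I Mf) (\<lambda>s. (norm (e s))\<^sup>2)"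
  proof -
    have fin: "(\<integral>\<^sup>+s. ennreal ((norm (e s))\<^sup>2) \<partial>Pi\<^sub>M I Mf) < \<infinity>" using eA by (simp add: le_less_trans)
    show ?thesis using em fin by (intro integrableI_bounded) auto
  qed
  have eI: "(\<integral>s. (norm (e s))\<^sup>2 \<partial>Pi\<^sub>M I Mf) \<le> sig"
  proof -
    have "ennreal (\<integral>s. (norm (e s))\<^sup>2 \<partial>Pi\<^sub>M I Mf) = (\<integral>\<^sup>+s. ennreal ((norm (e s))\<^sup>2) \<partial>Pi\<^sub>M I Mf)"
      using eint by (intro nn_integral_eq_integral[symmetric]) auto
    also have "\<dots> \<le> ennreal sig" by (rule eA)
    finally show ?thesis using sig by simp
  qed
  have cint: "integrable (Pi\<^sub>M I Mf) (\<lambda>s. inner (F s) (e s))"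
  proof (rule Bochner_Integration.integrable_bound)
    show "integrable (Pi\<^sub>M I Mf) (\<lambda>s. (norm (F s))\<^sup>2 + (norm (e s))\<^sup>2)" using Fint eint by simp
    show "(\<lambda>s. inner (F s) (e s)) \<in> borel_measurable (Pi\<^sub>M I Mf)" using Fm em by measurable
    show "AE s in Pi\<^sub>M I Mf. norm (inner (F s) (e s)) \<le> norm ((norm (F s))\<^sup>2 + (norm (e s))\<^sup>2)"
      using inner_abs_le_sq by auto
  qed
  have cI: "(\<integral>s. inner (F s) (e s) \<partial>Pi\<^sub>M I Mf) = 0"
  proof -
    have "(\<integral>s. inner (F s) (e s) \<partial>Pi\<^sub>M I Mf) = (\<integral>s. inner (F s) (e s) \<partial>Pi\<^sub>M (insert q I') Mf)"
      by (simp only: II)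
    also have "\<dots> = (\<integral>s. (\<integral>y. inner (F (s(q := y))) (e (s(q := y))) \<partial>Mf q) \<partial>Pi\<^sub>M I' Mf)"
      by (rule P.product_integral_insert[OF fI' qI']) (use cint II in simp)
    also have "\<dots> = (\<integral>s. 0 \<partial>Pi\<^sub>M I' Mf)"
    proof (intro Bochner_Integration.integral_cong refl)
      fix s
      have "(\<integral>y. inner (F (s(q := y))) (e (s(q := y))) \<partial>Mf q) = (\<integral>y. inner (F s) (g (X s) y - gm (X s)) \<partial>Mf q)"
        by (simp add: Fq eq)
      also have "\<dots> = inner (F s) (\<integral>y. g (X s) y - gm (X s) \<partial>Mf q)"
        by (rule integral_inner_right) (use gint in simp)
      finally have A: "(\<integral>y. inner (F (s(q := y))) (e (s(q := y))) \<partial>Mf q) = inner (F s) (\<integral>y. g (X s) y - gm (X s) \<partial>Mf q)" .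
      have B: "(\<integral>y. g (X s) y - gm (X s) \<partial>Mf q) = 0"
      proof -
        interpret Q: prob_space "Mf q" by (rule pps)
        show ?thesis using gint gmean prob_space.prob_space[OF pps[of q]] by (simp add: Bochner_Integration.integral_diff)
      qed
      show "(\<integral>y. inner (F (s(q := y))) (e (s(q := y))) \<partial>Mf q) = 0" by (simp only: A B inner_zero_right)
    qed
    finally show ?thesis by simp
  qed
  have pw: "(norm (F s + e s))\<^sup>2 = (norm (F s))\<^sup>2 + 2 * inner (F s) (e s) + (norm (e s))\<^sup>2" for s
    by (simp only: power2_norm_eq_inner) (simp add: inner_add_left inner_add_right inner_commute)
  have sint: "integrable (Pi\<^sub>M I Mf) (\<lambda>s. (norm (F s))\<^sup>2 + 2 * inner (F s) (e s) + (norm (e s))\<^sup>2)"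
    using Fint cint eint by simp
  have "integrable (Pi\<^sub>M I Mf) (\<lambda>s. (norm (F s + e s))\<^sup>2)" unfolding pw by (rule sint)
  thus "integrable (Pi\<^sub>M I Mf) (\<lambda>s. (norm (F s + (g (X s) (s q) - gm (X s))))\<^sup>2)"
    unfolding e_def .
  have "(\<integral>s. (norm (F s + e s))\<^sup>2 \<partial>Pi\<^sub>M I Mf) = (\<integral>s. (norm (F s))\<^sup>2 + 2 * inner (F s) (e s) + (norm (e s))\<^sup>2 \<partial>Pi\<^sub>M I Mf)"
    unfolding pw ..
  also have "\<dots> = (\<integral>s. (norm (F s))\<^sup>2 \<partial>Pi\<^sub>M I Mf) + 2 * (\<integral>s. inner (F s) (e s) \<partial>Pi\<^sub>M I Mf) + (\<integral>s. (norm (e s))\<^sup>2 \<partial>Pi\<^sub>M I Mf)"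
    using Fint cint eint by simp
  also have "\<dots> \<le> (\<integral>s. (norm (F s))\<^sup>2 \<partial>Pi\<^sub>M I Mf) + sig" using cI eI by simp
  finally show "(\<integral>s. (norm (F s + (g (X s) (s q) - gm (X s))))\<^sup>2 \<partial>Pi\<^sub>M I Mf) \<le> (\<integral>s. (norm (F s))\<^sup>2 \<partial>Pi\<^sub>M I Mf) + sig"
    unfolding e_def .
qed


lemma local_iter_cong:
  "(\<And>j x. j < k \<Longrightarrow> g j x = g' j x) \<Longrightarrow> local_iter g \<beta> c z k = local_iter g' \<beta> c z k"
  by (induction k) auto

lemma mb_grad_cong:
  "(\<And>b. b < B \<Longrightarrow> s t i k b = s' t i k b) \<Longrightarrow> mb_grad gF B s t i k x = mb_grad gF B s' t i k x"
  unfolding mb_grad_def by simp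

lemma fedcanon_cong:
  assumes "\<And>t' i k b. t' < t \<Longrightarrow> i < N \<Longrightarrow> k < K \<Longrightarrow> b < B \<Longrightarrow> s t' i k b = s' t' i k b"
  shows "fst (fedcanon gF h N K B \<alpha> \<beta> z0 c0 s t) = fst (fedcanon gF h N K B \<alpha> \<beta> z0 c0 s' t) \<and>
         (\<forall>i<N. snd (fedcanon gF h N K B \<alpha> \<beta> z0 c0 s t) i = snd (fedcanon gF h N K B \<alpha> \<beta> z0 c0 s' t) i)"
  using assms
proof (induction t)
  case 0 thus ?case by simp
next
  case (Suc t)
  have IH: "fst (fedcanon gF h N K B \<alpha> \<beta> z0 c0 s t) = fst (fedcanon gF h N K B \<alpha> \<beta> z0 c0 s' t)"
    "\<And>i. i < N \<Longrightarrow> snd (fedcanon gF h N K B \<alpha> \<beta> z0 c0 s t) i = snd (fedcanon gF h N K B \<alpha> \<beta> z0 c0 s' t) i"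
    using Suc by auto
  define z where "z = fst (fedcanon gF h N K B \<alpha> \<beta> z0 c0 s t)"
  define c where "c = snd (fedcanon gF h N K B \<alpha> \<beta> z0 c0 s t)"
  define c' where "c' = snd (fedcanon gF h N K B \<alpha> \<beta> z0 c0 s' t)"
  have Deq: "local_iter (mb_grad gF B s t i) \<beta> (c i) z K = local_iter (mb_grad gF B s' t i) \<beta> (c' i) z K" if "i < N" for i
  proof -
    have "c i = c' i" using IH(2)[OF that] unfolding c_def c'_def .
    moreover have "local_iter (mb_grad gF B s t i) \<beta> (c i) z K = local_iter (mb_grad gF B s' t i) \<beta> (c i) z K"
      by (intro local_iter_cong mb_grad_cong) (use Suc.prems that in auto)
    ultimately show ?thesis by simp
  qed
  have Dbar: "(\<Sum>i<N. (1 / (\<beta> * real K)) *\<^sub>R (z - local_iter (mb_grad gF B s t i) \<beta> (c i) z K))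
            = (\<Sum>i<N. (1 / (\<beta> * real K)) *\<^sub>R (z - local_iter (mb_grad gF B s' t i) \<beta> (c' i) z K))"
    using Deq by (intro sum.cong) auto
  show ?case
    using Dbar Deq IH unfolding z_def c_def c'_def by (simp add: Let_def)
qed

lemma fedcanon_Suc_fst:
  "fst (fedcanon gF h N K B \<alpha> \<beta> z0 c0 s (Suc t)) =
    prox h \<alpha> (fst (fedcanon gF h N K B \<alpha> \<beta> z0 c0 s t) - \<alpha> *\<^sub>R ((1 / real N) *\<^sub>R (\<Sum>i<N. (1 / (\<beta> * real K)) *\<^sub>R
       (fst (fedcanon gF h N K B \<alpha> \<beta> z0 c0 s t) - local_iter (mb_grad gF B s t i) \<beta> (snd (fedcanon gF h N K B \<alpha> \<beta> z0 c0 s t) i) (fst (fedcanon gF h N K B \<alpha> \<beta> z0 c0 s t)) K))))"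
  by (simp add: Let_def)

lemma fedcanon_Suc_snd:
  "snd (fedcanon gF h N K B \<alpha> \<beta> z0 c0 s (Suc t)) j =
    snd (fedcanon gF h N K B \<alpha> \<beta> z0 c0 s t) j + (1 / real N) *\<^sub>R (\<Sum>i<N. (1 / (\<beta> * real K)) *\<^sub>R
       (fst (fedcanon gF h N K B \<alpha> \<beta> z0 c0 s t) - local_iter (mb_grad gF B s t i) \<beta> (snd (fedcanon gF h N K B \<alpha> \<beta> z0 c0 s t) i) (fst (fedcanon gF h N K B \<alpha> \<beta> z0 c0 s t)) K))
     - (1 / (\<beta> * real K)) *\<^sub>R (fst (fedcanon gF h N K B \<alpha> \<beta> z0 c0 s t) - local_iter (mb_grad gF B s t j) \<beta> (snd (fedcanon gF h N K B \<alpha> \<beta> z0 c0 s t) j) (fst (fedcanon gF h N K B \<alpha> \<beta> z0 c0 s t)) K)"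
  by (simp add: Let_def)

locale fedprob =
  fixes h :: "'a::euclidean_space \<Rightarrow> ereal" and \<rho> \<alpha> L m :: real and F0 :: "'a \<Rightarrow> real" and gF0 :: "'a \<Rightarrow> 'a"
    and N K B :: nat and f :: "nat \<Rightarrow> 'a \<Rightarrow> real" and gf :: "nat \<Rightarrow> 'a \<Rightarrow> 'a"
    and gF :: "nat \<Rightarrow> 'a \<Rightarrow> 'b \<Rightarrow> 'a" and \<beta> Bh :: real and z0 :: 'a and c0 :: "nat \<Rightarrow> 'a"
    and T :: nat and \<sigma> :: real and D :: "nat \<Rightarrow> 'b measure" and M :: "'m measure"
    and \<xi> :: "nat \<Rightarrow> nat \<Rightarrow> nat \<Rightarrow> nat \<Rightarrow> 'm \<Rightarrow> 'b"
  assumes fp: "fedpath h \<rho> \<alpha> L m F0 gF0 N K B f gf \<beta> Bh c0"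
    and T: "T \<ge> 1"
    and D_prob: "\<And>i. i < N \<Longrightarrow> prob_space (D i)"
    and gF_meas: "\<And>i. i < N \<Longrightarrow> (\<lambda>(x, \<xi>'). gF i x \<xi>') \<in> borel_measurable (borel \<Otimes>\<^sub>M D i)"
    and gF_unb: "\<And>i x. i < N \<Longrightarrow> integrable (D i) (gF i x) \<and> (\<integral>\<xi>'. gF i x \<xi>' \<partial>D i) = gf i x"
    and gF_var: "\<And>i x. i < N \<Longrightarrow> (\<integral>\<^sup>+\<xi>'. ennreal ((norm (gF i x \<xi>' - gf i x))\<^sup>2) \<partial>D i) \<le> ennreal (\<sigma>\<^sup>2)"
    and M_prob: "prob_space M"
    and \<xi>_meas: "\<And>t i k b. i < N \<Longrightarrow> \<xi> t i k b \<in> M \<rightarrow>\<^sub>M D i"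
    and \<xi>_distr: "\<And>t i k b. i < N \<Longrightarrow> distr M (D i) (\<xi> t i k b) = D i"
    and \<xi>_indep: "prob_space.indep_vars M (\<lambda>(t, i, k, b). D i) (\<lambda>(t, i, k, b). \<xi> t i k b)
                    {(t, i, k, b). i < N \<and> k < K \<and> b < B}"
begin

lemma N: "N > 0" and K: "K > 0" and B: "B > 0" and \<beta>: "\<beta> > 0"
  using fedpath.N[OF fp] fedpath.K[OF fp] fedpath.B[OF fp] fedpath.\<beta>[OF fp] by auto

definition "IT = {(t, i, k, b). t < T \<and> i < N \<and> k < K \<and> b < B}"
definition "Dfam j = D (case j of (t, i, k, b) \<Rightarrow> if i < N then i else 0)"
definition "PS = Pi\<^sub>M IT Dfam"
definition "sc s = (\<lambda>t i k b. s (t, i, k, b))"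

lemma IT_finite: "finite IT"
proof -
  have "IT \<subseteq> {..<T} \<times> {..<N} \<times> {..<K} \<times> {..<B}" unfolding IT_def by auto
  thus ?thesis by (rule finite_subset) auto
qed

lemma Dfam_prob: "prob_space (Dfam j)"
  unfolding Dfam_def using D_prob N by (auto split: prod.splits)

lemma Dfam_IT: "(t, i, k, b) \<in> IT \<Longrightarrow> Dfam (t, i, k, b) = D i"
  unfolding Dfam_def IT_def by simp

lemma comp_meas: "(t, i, k, b) \<in> IT \<Longrightarrow> (\<lambda>s. s (t, i, k, b)) \<in> PS \<rightarrow>\<^sub>M D i"
  using measurable_component_singleton[of "(t, i, k, b)" IT Dfam] unfolding PS_def by (simp add: Dfam_IT)

lemma gF_comp_meas:
  assumes "(t, i, k, b) \<in> IT" "X \<in> borel_measurable PS"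
  shows "(\<lambda>s. gF i (X s) (s (t, i, k, b))) \<in> borel_measurable PS"
proof -
  have i: "i < N" using assms(1) unfolding IT_def by simp
  have "(\<lambda>s. (X s, s (t, i, k, b))) \<in> PS \<rightarrow>\<^sub>M borel \<Otimes>\<^sub>M D i"
    using assms(2) comp_meas[OF assms(1)] by (rule measurable_Pair)
  from measurable_compose[OF this gF_meas[OF i]] show ?thesis by simp
qed

lemma gf_meas: "i < N \<Longrightarrow> gf i \<in> borel_measurable borel"
proof -
  assume i: "i < N"
  have "L-lipschitz_on UNIV (gf i)"
    using fedpath.lip[OF fp i] fedpath.L[OF fp] unfolding lipschitz_on_def by (simp add: dist_norm)
  hence "continuous_on UNIV (gf i)" by (rule lipschitz_on_continuous_on)
  thus ?thesis by (rule borel_measurable_continuous_onI)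
qed

lemma prox_meas: "prox h \<alpha> \<in> borel_measurable borel"
proof -
  interpret P: proxsetup h \<rho> \<alpha> L m F0 gF0 using fp by (rule fedpath.axioms(1))
  have pos: "1 - \<alpha> * \<rho> > 0" using P.\<alpha>\<rho> by simp
  have "(1 / (1 - \<alpha> * \<rho>))-lipschitz_on UNIV (prox h \<alpha>)"
    unfolding lipschitz_on_def dist_norm using P.prox_lip pos by (simp add: divide_inverse mult.commute)
  hence "continuous_on UNIV (prox h \<alpha>)" by (rule lipschitz_on_continuous_on)
  thus ?thesis by (rule borel_measurable_continuous_onI)
qed

lemma gF0_meas: "gF0 \<in> borel_measurable borel"
proof -
  have "gF0 = (\<lambda>x. (1 / real N) *\<^sub>R (\<Sum>i<N. gf i x))" by (rule fedpath.gF0_def[OF fp])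
  moreover have "(\<lambda>x. (1 / real N) *\<^sub>R (\<Sum>i<N. gf i x)) \<in> borel_measurable borel"
    using gf_meas by (intro borel_measurable_scaleR borel_measurable_const borel_measurable_sum) auto
  ultimately show ?thesis by simp
qed

lemma loc_meas:
  assumes t: "t < T" and i: "i < N" and Zm: "Z \<in> borel_measurable PS" and Cm: "C \<in> borel_measurable PS"
  shows "k \<le> K \<Longrightarrow> (\<lambda>s. local_iter (mb_grad gF B (sc s) t i) \<beta> (C s) (Z s) k) \<in> borel_measurable PS"
proof (induction k)
  case 0 thus ?case using Zm by simp
next
  case (Suc k)
  have k: "k < K" using Suc.prems by simp
  define X where "X s = local_iter (mb_grad gF B (sc s) t i) \<beta> (C s) (Z s) k" for s
  have Xm: "X \<in> borel_measurable PS" unfolding X_def using Suc by simp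
  have "(\<lambda>s. mb_grad gF B (sc s) t i k (X s)) \<in> borel_measurable PS"
  proof -
    have "(\<lambda>s. gF i (X s) (s (t, i, k, b))) \<in> borel_measurable PS" if "b < B" for b
      using t i k that by (intro gF_comp_meas Xm) (simp add: IT_def)
    hence "(\<lambda>s. (1 / real B) *\<^sub>R (\<Sum>b<B. gF i (X s) (s (t, i, k, b)))) \<in> borel_measurable PS"
      by (intro borel_measurable_scaleR borel_measurable_const borel_measurable_sum) auto
    thus ?thesis unfolding mb_grad_def sc_def .
  qed
  hence "(\<lambda>s. X s - \<beta> *\<^sub>R (mb_grad gF B (sc s) t i k (X s) + C s)) \<in> borel_measurable PS"
    using Xm Cm by measurable
  thus ?case unfolding X_def by simp
qed

lemma fed_meas:
  "t \<le> T \<Longrightarrow> (\<lambda>s. fst (fedcanon gF h N K B \<alpha> \<beta> z0 c0 (sc s) t)) \<in> borel_measurable PS \<and>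
     (\<forall>i<N. (\<lambda>s. snd (fedcanon gF h N K B \<alpha> \<beta> z0 c0 (sc s) t) i) \<in> borel_measurable PS)"
proof (induction t)
  case 0 thus ?case by simp
next
  case (Suc t)
  hence t: "t < T" by simp
  define Z where "Z s = fst (fedcanon gF h N K B \<alpha> \<beta> z0 c0 (sc s) t)" for s
  define C where "C s = snd (fedcanon gF h N K B \<alpha> \<beta> z0 c0 (sc s) t)" for s
  have Zm: "Z \<in> borel_measurable PS" and Cm: "\<And>i. i < N \<Longrightarrow> (\<lambda>s. C s i) \<in> borel_measurable PS"
    using Suc unfolding Z_def C_def by auto
  define Dl where "Dl s i = (1 / (\<beta> * real K)) *\<^sub>R (Z s - local_iter (mb_grad gF B (sc s) t i) \<beta> (C s i) (Z s) K)" for s i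
  have Dlm: "(\<lambda>s. Dl s i) \<in> borel_measurable PS" if "i < N" for i
  proof -
    have "(\<lambda>s. local_iter (mb_grad gF B (sc s) t i) \<beta> (C s i) (Z s) K) \<in> borel_measurable PS"
      by (rule loc_meas[OF t that Zm Cm[OF that]]) simp
    thus ?thesis unfolding Dl_def using Zm by measurable
  qed
  have Dbm: "(\<lambda>s. (1 / real N) *\<^sub>R (\<Sum>i<N. Dl s i)) \<in> borel_measurable PS"
    using Dlm by (intro borel_measurable_scaleR borel_measurable_const borel_measurable_sum) auto
  have "(\<lambda>s. prox h \<alpha> (Z s - \<alpha> *\<^sub>R ((1 / real N) *\<^sub>R (\<Sum>i<N. Dl s i)))) \<in> borel_measurable PS"
  proof -
    have "(\<lambda>s. Z s - \<alpha> *\<^sub>R ((1 / real N) *\<^sub>R (\<Sum>i<N. Dl s i))) \<in> borel_measurable PS" using Zm Dbm by measurable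
    from measurable_compose[OF this prox_meas] show ?thesis .
  qed
  moreover have "(\<lambda>s. C s j + (1 / real N) *\<^sub>R (\<Sum>i<N. Dl s i) - Dl s j) \<in> borel_measurable PS" if "j < N" for j
    using Cm[OF that] Dbm Dlm[OF that] by measurable
  ultimately show ?case unfolding fedcanon_Suc_fst fedcanon_Suc_snd Z_def[symmetric] C_def[symmetric] Dl_def[symmetric]
    by simp
qed

end


lemma sum_lessThan_add_split:
  fixes n m :: nat
  shows "(\<Sum>p<n + m. g p) = (\<Sum>p<n. g p) + (\<Sum>b<m. g (n + b))"
  by (induction m) (auto simp: add.assoc)

lemma sum_reindex_div_mod:
  fixes g :: "nat \<Rightarrow> nat \<Rightarrow> 'a::comm_monoid_add"
  assumes B: "B > 0"
  shows "(\<Sum>p<k * B. g (p div B) (p mod B)) = (\<Sum>j<k. \<Sum>b<B. g j b)"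
proof (induction k)
  case 0 thus ?case by simp
next
  case (Suc k)
  have "(\<Sum>p<Suc k * B. g (p div B) (p mod B)) = (\<Sum>p<k * B. g (p div B) (p mod B)) + (\<Sum>b<B. g ((k * B + b) div B) ((k * B + b) mod B))"
    using sum_lessThan_add_split[of "\<lambda>p. g (p div B) (p mod B)" "k * B" B] by (simp add: add.commute)
  also have "(\<Sum>b<B. g ((k * B + b) div B) ((k * B + b) mod B)) = (\<Sum>b<B. g k b)"
    using B by (intro sum.cong refl) simp
  finally show ?case using Suc by simp
qed

context fedprob begin

abbreviation "XL s t i k \<equiv> fedpath.xl h \<alpha> N K B gF \<beta> z0 c0 (sc s) t i k"
definition "EPS t i s j b = gF i (XL s t i j) (s (t, i, j, b)) - gf i (XL s t i j)"
definition "QQ t i n s = (\<Sum>p<n. EPS t i s (p div B) (p mod B))"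

lemma XL_eq: "XL s t i k = local_iter (mb_grad gF B (sc s) t i) \<beta> (snd (fedcanon gF h N K B \<alpha> \<beta> z0 c0 (sc s) t) i) (fst (fedcanon gF h N K B \<alpha> \<beta> z0 c0 (sc s) t)) k"
  by (simp add: fedpath.xl_def[OF fp] fedpath.zz_def[OF fp] fedpath.cc_def[OF fp])

lemma XL_meas: "t < T \<Longrightarrow> i < N \<Longrightarrow> k \<le> K \<Longrightarrow> (\<lambda>s. XL s t i k) \<in> borel_measurable PS"
  unfolding XL_eq using fed_meas[of t] by (intro loc_meas) auto

lemma sc_upd: "sc (s(q := y)) t' i' k' b' = (if (t', i', k', b') = q then y else sc s t' i' k' b')"
  unfolding sc_def by auto

lemma XL_ignore:
  assumes i: "i < N" and k: "k \<le> kq"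
  shows "XL (s((t, i, kq, bq) := y)) t i k = XL s t i k"
proof -
  let ?s' = "s((t, i, kq, bq) := y)"
  have fc: "fst (fedcanon gF h N K B \<alpha> \<beta> z0 c0 (sc ?s') t) = fst (fedcanon gF h N K B \<alpha> \<beta> z0 c0 (sc s) t) \<and>
     (\<forall>i<N. snd (fedcanon gF h N K B \<alpha> \<beta> z0 c0 (sc ?s') t) i = snd (fedcanon gF h N K B \<alpha> \<beta> z0 c0 (sc s) t) i)"
    by (rule fedcanon_cong) (auto simp: sc_upd)
  have "local_iter (mb_grad gF B (sc ?s') t i) \<beta> (snd (fedcanon gF h N K B \<alpha> \<beta> z0 c0 (sc s) t) i) (fst (fedcanon gF h N K B \<alpha> \<beta> z0 c0 (sc s) t)) k
      = local_iter (mb_grad gF B (sc s) t i) \<beta> (snd (fedcanon gF h N K B \<alpha> \<beta> z0 c0 (sc s) t) i) (fst (fedcanon gF h N K B \<alpha> \<beta> z0 c0 (sc s) t)) k"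
    by (intro local_iter_cong mb_grad_cong) (use k in \<open>auto simp: sc_upd\<close>)
  thus ?thesis unfolding XL_eq using fc i by simp
qed

lemma EPS_ignore:
  assumes i: "i < N" and j: "j \<le> kq" and ne: "(j, b) \<noteq> (kq, bq)"
  shows "EPS t i (s((t, i, kq, bq) := y)) j b = EPS t i s j b"
  unfolding EPS_def XL_ignore[OF i j] using ne by auto

lemma QQ_ignore:
  assumes i: "i < N" and B: "B > 0"
  shows "QQ t i n (s((t, i, n div B, n mod B) := y)) = QQ t i n s"
  unfolding QQ_def
proof (intro sum.cong refl)
  fix p assume "p \<in> {..<n}"
  hence p: "p < n" by simp
  have "p div B \<le> n div B" using p by (simp add: div_le_mono)
  moreover have "(p div B, p mod B) \<noteq> (n div B, n mod B)"
  proof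
    assume "(p div B, p mod B) = (n div B, n mod B)"
    hence "p = n" by (metis div_mult_mod_eq prod.inject)
    thus False using p by simp
  qed
  ultimately show "EPS t i (s((t, i, n div B, n mod B) := y)) (p div B) (p mod B) = EPS t i s (p div B) (p mod B)"
    by (rule EPS_ignore[OF i])
qed

lemma EPS_meas: "t < T \<Longrightarrow> i < N \<Longrightarrow> j < K \<Longrightarrow> b < B \<Longrightarrow> (\<lambda>s. EPS t i s j b) \<in> borel_measurable PS"
proof -
  assume a: "t < T" "i < N" "j < K" "b < B"
  have X: "(\<lambda>s. XL s t i j) \<in> borel_measurable PS" using a by (intro XL_meas) auto
  have "(\<lambda>s. gF i (XL s t i j) (s (t, i, j, b))) \<in> borel_measurable PS"
    using a by (intro gF_comp_meas X) (simp add: IT_def)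
  moreover have "(\<lambda>s. gf i (XL s t i j)) \<in> borel_measurable PS" using measurable_compose[OF X gf_meas[OF a(2)]] .
  ultimately show ?thesis unfolding EPS_def by measurable
qed

lemma QQ_meas: "t < T \<Longrightarrow> i < N \<Longrightarrow> n \<le> K * B \<Longrightarrow> QQ t i n \<in> borel_measurable PS"
proof -
  assume a: "t < T" "i < N" "n \<le> K * B"
  have "(\<lambda>s. EPS t i s (p div B) (p mod B)) \<in> borel_measurable PS" if "p < n" for p
  proof (rule EPS_meas[OF a(1,2)])
    have "p < K * B" using that a(3) by simp
    thus "p div B < K" by (simp add: div_less_iff_less_mult B)
    show "p mod B < B" using B by simp
  qed
  hence "(\<lambda>s. \<Sum>p<n. EPS t i s (p div B) (p mod B)) \<in> borel_measurable PS"
    by (intro borel_measurable_sum) auto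
  thus ?thesis unfolding QQ_def[abs_def] .
qed

lemma QQ_bound:
  assumes t: "t < T" and i: "i < N"
  shows "n \<le> K * B \<Longrightarrow> integrable PS (\<lambda>s. (norm (QQ t i n s))\<^sup>2) \<and> (\<integral>s. (norm (QQ t i n s))\<^sup>2 \<partial>PS) \<le> real n * \<sigma>\<^sup>2"
proof (induction n)
  case 0
  interpret PP: prob_space PS unfolding PS_def by (rule prob_space_PiM) (rule Dfam_prob)
  show ?case by (simp add: QQ_def)
next
  case (Suc n)
  hence n: "n < K * B" by simp
  define q where "q = (t, i, n div B, n mod B)"
  have nd: "n div B < K" using n B by (simp add: div_less_iff_less_mult)
  have nm: "n mod B < B" using B by simp
  have qI: "q \<in> IT" unfolding q_def IT_def using t i nd nm by simp
  have Dq: "Dfam q = D i" unfolding q_def using qI[unfolded q_def] by (rule Dfam_IT)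
  have IH: "integrable PS (\<lambda>s. (norm (QQ t i n s))\<^sup>2)" "(\<integral>s. (norm (QQ t i n s))\<^sup>2 \<partial>PS) \<le> real n * \<sigma>\<^sup>2"
    using Suc n by auto
  have Xm: "(\<lambda>s. XL s t i (n div B)) \<in> borel_measurable PS" using t i nd by (intro XL_meas) auto
  have Fm: "QQ t i n \<in> borel_measurable PS" using t i n by (intro QQ_meas) auto
  note os = orth_step[where Mf = Dfam and I = IT and q = q and F = "QQ t i n" and X = "\<lambda>s. XL s t i (n div B)"
      and g = "gF i" and gm = "gf i" and sig = "\<sigma>\<^sup>2"]
  have prem: "\<And>j. prob_space (Dfam j)" "finite IT" "q \<in> IT"
    "(\<lambda>(x, y). gF i x y) \<in> borel_measurable (borel \<Otimes>\<^sub>M Dfam q)"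
    "\<And>x. integrable (Dfam q) (gF i x)" "\<And>x. (\<integral>y. gF i x y \<partial>Dfam q) = gf i x"
    "\<And>x. (\<integral>\<^sup>+y. ennreal ((norm (gF i x y - gf i x))\<^sup>2) \<partial>Dfam q) \<le> ennreal (\<sigma>\<^sup>2)"
    "\<sigma>\<^sup>2 \<ge> 0" "gf i \<in> borel_measurable borel"
    "QQ t i n \<in> borel_measurable (Pi\<^sub>M IT Dfam)" "(\<lambda>s. XL s t i (n div B)) \<in> borel_measurable (Pi\<^sub>M IT Dfam)"
    "\<And>s y. QQ t i n (s(q := y)) = QQ t i n s" "\<And>s y. XL (s(q := y)) t i (n div B) = XL s t i (n div B)"
    "integrable (Pi\<^sub>M IT Dfam) (\<lambda>s. (norm (QQ t i n s))\<^sup>2)"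
    using Dfam_prob IT_finite qI gF_meas[OF i] gF_unb[OF i] gF_var[OF i] gf_meas[OF i] Fm Xm IH(1)
      QQ_ignore[OF i B] XL_ignore[OF i] Dq[unfolded q_def] unfolding PS_def q_def by auto
  have eq: "QQ t i (Suc n) s = QQ t i n s + (gF i (XL s t i (n div B)) (s q) - gf i (XL s t i (n div B)))" for s
    unfolding QQ_def q_def EPS_def by simp
  show ?case using os(1)[OF prem] os(2)[OF prem] IH(2) unfolding eq[abs_def] PS_def[symmetric]
    by (simp add: algebra_simps)
qed

abbreviation "MMs s t i k \<equiv> fedpath.MM h \<alpha> N K B gf gF \<beta> z0 c0 (sc s) t i k"
abbreviation "RTs s t \<equiv> fedpath.Rt h \<alpha> N K B gf gF \<beta> z0 c0 (sc s) t"
abbreviation "ZTs s t \<equiv> fedpath.Zt h \<alpha> N K B gf gF \<beta> z0 c0 (sc s) t"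
abbreviation "GTs s t \<equiv> fedpath.Gt h \<alpha> gF0 N K B gF \<beta> z0 c0 (sc s) t"

lemma MM_QQ: "MMs s t i k = (1 / real B) *\<^sub>R QQ t i (k * B) s"
proof -
  have ee: "fedpath.ee h \<alpha> N K B gf gF \<beta> z0 c0 (sc s) t i j = (1 / real B) *\<^sub>R (\<Sum>b<B. EPS t i s j b)" for j
  proof -
    have "(\<Sum>b<B. EPS t i s j b) = (\<Sum>b<B. gF i (XL s t i j) (s (t, i, j, b))) - real B *\<^sub>R gf i (XL s t i j)"
      unfolding EPS_def by (simp add: sum_subtractf sum_constant_scaleR)
    thus ?thesis using B
      by (simp add: fedpath.ee_def[OF fp] fedpath.gg_def[OF fp] mb_grad_def sc_def scaleR_diff_right)
  qed
  have "MMs s t i k = (\<Sum>j<k. (1 / real B) *\<^sub>R (\<Sum>b<B. EPS t i s j b))"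
    unfolding fedpath.MM_def[OF fp] ee ..
  also have "\<dots> = (1 / real B) *\<^sub>R (\<Sum>j<k. \<Sum>b<B. EPS t i s j b)" by (simp add: scaleR_sum_right)
  also have "(\<Sum>j<k. \<Sum>b<B. EPS t i s j b) = QQ t i (k * B) s"
    unfolding QQ_def using sum_reindex_div_mod[OF B, of "EPS t i s" k] by simp
  finally show ?thesis .
qed

lemma MM_bound:
  assumes t: "t < T" and i: "i < N" and k: "k \<le> K"
  shows "integrable PS (\<lambda>s. (norm (MMs s t i k))\<^sup>2) \<and> (\<integral>s. (norm (MMs s t i k))\<^sup>2 \<partial>PS) \<le> real k * \<sigma>\<^sup>2 / real B"
proof -
  have kb: "k * B \<le> K * B" using k by simp
  note Q = QQ_bound[OF t i kb]
  have eq: "(norm (MMs s t i k))\<^sup>2 = (norm (QQ t i (k * B) s))\<^sup>2 / (real B)\<^sup>2" for s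
    unfolding MM_QQ by (simp add: power_divide)
  have "integrable PS (\<lambda>s. (norm (MMs s t i k))\<^sup>2)" unfolding eq using Q by simp
  moreover have "(\<integral>s. (norm (MMs s t i k))\<^sup>2 \<partial>PS) = (\<integral>s. (norm (QQ t i (k * B) s))\<^sup>2 \<partial>PS) / (real B)\<^sup>2"
    unfolding eq by simp
  moreover have "(\<integral>s. (norm (QQ t i (k * B) s))\<^sup>2 \<partial>PS) / (real B)\<^sup>2 \<le> real (k * B) * \<sigma>\<^sup>2 / (real B)\<^sup>2"
    using Q by (intro divide_right_mono) auto
  moreover have "real (k * B) * \<sigma>\<^sup>2 / (real B)\<^sup>2 = real k * \<sigma>\<^sup>2 / real B" using B by (simp add: power2_eq_square)
  ultimately show ?thesis by simp
qed

lemma RT_bound: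
  assumes t: "t < T"
  shows "integrable PS (\<lambda>s. RTs s t) \<and> (\<integral>s. RTs s t \<partial>PS) \<le> \<sigma>\<^sup>2 / real B"
proof -
  have RTe: "RTs s t = (1 / real N) * (\<Sum>i<N. (\<Sum>k<K. (norm (MMs s t i k))\<^sup>2) / (real K)\<^sup>2)" for s
    by (simp add: fedpath.Rt_def[OF fp] fedpath.Mx_def[OF fp])
  have int: "integrable PS (\<lambda>s. (norm (MMs s t i k))\<^sup>2)" if "i < N" "k < K" for i k
    using MM_bound[OF t that(1)] that by simp
  show ?thesis
  proof
    show "integrable PS (\<lambda>s. RTs s t)" unfolding RTe using int
      by (intro Bochner_Integration.integrable_mult_right Bochner_Integration.integrable_sum Bochner_Integration.integrable_divide) auto
    have "(\<integral>s. RTs s t \<partial>PS) = (1 / real N) * (\<Sum>i<N. (\<Sum>k<K. (\<integral>s. (norm (MMs s t i k))\<^sup>2 \<partial>PS)) / (real K)\<^sup>2)"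
    proof -
      have i1: "integrable PS (\<lambda>s. (\<Sum>k<K. (norm (MMs s t i k))\<^sup>2) / (real K)\<^sup>2)" if "i < N" for i
        using int that by (intro Bochner_Integration.integrable_sum Bochner_Integration.integrable_divide) auto
      have "(\<integral>s. (\<Sum>i<N. (\<Sum>k<K. (norm (MMs s t i k))\<^sup>2) / (real K)\<^sup>2) \<partial>PS)
          = (\<Sum>i<N. (\<integral>s. (\<Sum>k<K. (norm (MMs s t i k))\<^sup>2) / (real K)\<^sup>2 \<partial>PS))"
        using i1 by (intro Bochner_Integration.integral_sum) auto
      also have "\<dots> = (\<Sum>i<N. (\<Sum>k<K. (\<integral>s. (norm (MMs s t i k))\<^sup>2 \<partial>PS)) / (real K)\<^sup>2)"
      proof (intro sum.cong refl)
        fix i assume "i \<in> {..<N}"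
        thus "(\<integral>s. (\<Sum>k<K. (norm (MMs s t i k))\<^sup>2) / (real K)\<^sup>2 \<partial>PS) = (\<Sum>k<K. (\<integral>s. (norm (MMs s t i k))\<^sup>2 \<partial>PS)) / (real K)\<^sup>2"
          using int by (simp add: Bochner_Integration.integral_sum)
      qed
      finally show ?thesis unfolding RTe by simp
    qed
    also have "\<dots> \<le> (1 / real N) * (\<Sum>i<N. (\<Sum>k<K. real K * \<sigma>\<^sup>2 / real B) / (real K)\<^sup>2)"
    proof (intro mult_left_mono sum_mono divide_right_mono)
      fix i k assume "i \<in> {..<N}" "k \<in> {..<K}"
      hence "(\<integral>s. (norm (MMs s t i k))\<^sup>2 \<partial>PS) \<le> real k * \<sigma>\<^sup>2 / real B" using MM_bound[OF t] by simp
      also have "\<dots> \<le> real K * \<sigma>\<^sup>2 / real B" using \<open>k \<in> {..<K}\<close> by (intro divide_right_mono mult_right_mono) auto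
      finally show "(\<integral>s. (norm (MMs s t i k))\<^sup>2 \<partial>PS) \<le> real K * \<sigma>\<^sup>2 / real B" .
    qed auto
    also have "\<dots> = \<sigma>\<^sup>2 / real B" using N K by (simp add: power2_eq_square)
    finally show "(\<integral>s. RTs s t \<partial>PS) \<le> \<sigma>\<^sup>2 / real B" .
  qed
qed

lemma ZT_bound:
  assumes t: "t < T"
  shows "integrable PS (\<lambda>s. ZTs s t) \<and> (\<integral>s. ZTs s t \<partial>PS) \<le> \<sigma>\<^sup>2 / (real B * real K)"
proof -
  have ZTe: "ZTs s t = (1 / real N) * (\<Sum>i<N. (norm (MMs s t i K))\<^sup>2 / (real K)\<^sup>2)" for s
    by (simp add: fedpath.Zt_def[OF fp])
  have int: "integrable PS (\<lambda>s. (norm (MMs s t i K))\<^sup>2)" if "i < N" for i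
    using MM_bound[OF t that] by simp
  show ?thesis
  proof
    show "integrable PS (\<lambda>s. ZTs s t)" unfolding ZTe using int
      by (intro Bochner_Integration.integrable_mult_right Bochner_Integration.integrable_sum Bochner_Integration.integrable_divide) auto
    have "(\<integral>s. ZTs s t \<partial>PS) = (1 / real N) * (\<Sum>i<N. (\<integral>s. (norm (MMs s t i K))\<^sup>2 \<partial>PS) / (real K)\<^sup>2)"
      unfolding ZTe using int by (simp add: Bochner_Integration.integral_sum)
    also have "\<dots> \<le> (1 / real N) * (\<Sum>i<N. (real K * \<sigma>\<^sup>2 / real B) / (real K)\<^sup>2)"
      using MM_bound[OF t] by (intro mult_left_mono sum_mono divide_right_mono) auto
    also have "\<dots> = \<sigma>\<^sup>2 / (real B * real K)" using N K by (simp add: power2_eq_square)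
    finally show "(\<integral>s. ZTs s t \<partial>PS) \<le> \<sigma>\<^sup>2 / (real B * real K)" .
  qed
qed

abbreviation "ZZs s t \<equiv> fedpath.zz h \<alpha> N K B gF \<beta> z0 c0 (sc s) t"

lemma ZZ_meas: "t \<le> T \<Longrightarrow> (\<lambda>s. ZZs s t) \<in> borel_measurable PS"
  using fed_meas[of t] by (simp add: fedpath.zz_def[OF fp])

lemma GT_meas: assumes t: "t \<le> T" shows "(\<lambda>s. GTs s t) \<in> borel_measurable PS"
proof -
  have Z: "(\<lambda>s. ZZs s t) \<in> borel_measurable PS" by (rule ZZ_meas[OF t])
  have g: "(\<lambda>s. gF0 (ZZs s t)) \<in> borel_measurable PS" using measurable_compose[OF Z gF0_meas] .
  have "(\<lambda>s. ZZs s t - \<alpha> *\<^sub>R gF0 (ZZs s t)) \<in> borel_measurable PS" using Z g by measurable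
  from measurable_compose[OF this prox_meas]
  have p: "(\<lambda>s. prox h \<alpha> (ZZs s t - \<alpha> *\<^sub>R gF0 (ZZs s t))) \<in> borel_measurable PS" .
  have "(\<lambda>s. (norm ((1 / \<alpha>) *\<^sub>R (ZZs s t - prox h \<alpha> (ZZs s t - \<alpha> *\<^sub>R gF0 (ZZs s t)))))\<^sup>2) \<in> borel_measurable PS"
    using Z p by measurable
  thus ?thesis by (simp add: fedpath.Gt_def[OF fp] Gmap_def)
qed

definition "Xi \<omega> = (\<lambda>j\<in>IT. (\<lambda>(t, i, k, b). \<xi> t i k b) j \<omega>)"

lemma Xi_meas: "Xi \<in> M \<rightarrow>\<^sub>M PS"
  unfolding Xi_def PS_def
proof (rule measurable_restrict)
  fix j assume "j \<in> IT"
  then obtain t i k b where j: "j = (t, i, k, b)" "i < N" unfolding IT_def by auto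
  show "(\<lambda>(t, i, k, b). \<xi> t i k b) j \<in> M \<rightarrow>\<^sub>M Dfam j"
    using \<xi>_meas[OF j(2)] \<open>j \<in> IT\<close> unfolding j by (simp add: Dfam_IT)
qed

lemma Xi_distr: "distr M PS Xi = PS"
proof -
  interpret MP: prob_space M by (rule M_prob)
  have sub: "IT \<subseteq> {(t, i, k, b). i < N \<and> k < K \<and> b < B}" unfolding IT_def by auto
  have ind: "MP.indep_vars (\<lambda>(t, i, k, b). D i) (\<lambda>(t, i, k, b). \<xi> t i k b) IT"
    using MP.indep_vars_subset[OF \<xi>_indep sub] .
  have "(0, 0, 0, 0) \<in> IT" using T N K B unfolding IT_def by simp
  hence ne: "IT \<noteq> {}" by auto
  have rv: "MP.random_variable ((\<lambda>(t, i, k, b). D i) j) ((\<lambda>(t, i, k, b). \<xi> t i k b) j)" if "j \<in> IT" for j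
    using that \<xi>_meas unfolding IT_def by auto
  have "distr M (Pi\<^sub>M IT (\<lambda>(t, i, k, b). D i)) (\<lambda>x. \<lambda>j\<in>IT. (\<lambda>(t, i, k, b). \<xi> t i k b) j x)
      = Pi\<^sub>M IT (\<lambda>j. distr M ((\<lambda>(t, i, k, b). D i) j) ((\<lambda>(t, i, k, b). \<xi> t i k b) j))"
    using MP.indep_vars_iff_distr_eq_PiM'[OF ne rv] ind by simp
  moreover have "Pi\<^sub>M IT (\<lambda>(t, i, k, b). D i) = PS"
    unfolding PS_def by (rule PiM_cong) (auto simp: Dfam_IT)
  moreover have "Pi\<^sub>M IT (\<lambda>j. distr M ((\<lambda>(t, i, k, b). D i) j) ((\<lambda>(t, i, k, b). \<xi> t i k b) j)) = PS"
    unfolding PS_def by (rule PiM_cong) (auto simp: Dfam_IT IT_def \<xi>_distr)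
  ultimately show ?thesis unfolding Xi_def by simp
qed

lemma z_Xi:
  assumes "t \<le> T"
  shows "fst (fedcanon gF h N K B \<alpha> \<beta> z0 c0 (\<lambda>t i k b. \<xi> t i k b \<omega>) t) = ZZs (Xi \<omega>) t"
proof -
  have "fst (fedcanon gF h N K B \<alpha> \<beta> z0 c0 (\<lambda>t i k b. \<xi> t i k b \<omega>) t) = fst (fedcanon gF h N K B \<alpha> \<beta> z0 c0 (sc (Xi \<omega>)) t)
    \<and> (\<forall>i<N. snd (fedcanon gF h N K B \<alpha> \<beta> z0 c0 (\<lambda>t i k b. \<xi> t i k b \<omega>) t) i = snd (fedcanon gF h N K B \<alpha> \<beta> z0 c0 (sc (Xi \<omega>)) t) i)"
    by (rule fedcanon_cong) (use assms in \<open>auto simp: sc_def Xi_def IT_def\<close>)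
  hence "fst (fedcanon gF h N K B \<alpha> \<beta> z0 c0 (\<lambda>t i k b. \<xi> t i k b \<omega>) t) = fst (fedcanon gF h N K B \<alpha> \<beta> z0 c0 (sc (Xi \<omega>)) t)"
    by (rule conjunct1)
  thus ?thesis by (simp add: fedpath.zz_def[OF fp])
qed

lemma PS_prob: "prob_space PS" unfolding PS_def by (rule prob_space_PiM) (rule Dfam_prob)

lemma main_bound:
  assumes h0: "h z0 \<noteq> \<infinity>"
  shows "(\<Sum>t<T. \<integral>\<^sup>+\<omega>. ennreal ((norm (Gmap h \<alpha> (fst (fedcanon gF h N K B \<alpha> \<beta> z0 c0 (\<lambda>t i k b. \<xi> t i k b \<omega>) t))
            (gF0 (fst (fedcanon gF h N K B \<alpha> \<beta> z0 c0 (\<lambda>t i k b. \<xi> t i k b \<omega>) t)))))\<^sup>2) \<partial>M)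
    \<le> ennreal (8 * ((F0 z0 + real_of_ereal (h z0) - m) / \<alpha>)
        + 8 * ((1 / real N) * (\<Sum>i<N. (norm (gf i z0 + c0 i - gF0 z0))\<^sup>2)) + real T * Bh
        + real T * (\<sigma>\<^sup>2 / real B) / 8 + 50 * (real T * (\<sigma>\<^sup>2 / (real B * real K))))"
proof -
  interpret PP: prob_space PS by (rule PS_prob)
  define C0 where "C0 = 8 * ((F0 z0 + real_of_ereal (h z0) - m) / \<alpha>)
        + 8 * ((1 / real N) * (\<Sum>i<N. (norm (gf i z0 + c0 i - gF0 z0))\<^sup>2)) + real T * Bh"
  have Geq: "(norm (Gmap h \<alpha> (fst (fedcanon gF h N K B \<alpha> \<beta> z0 c0 (\<lambda>t i k b. \<xi> t i k b \<omega>) t))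
            (gF0 (fst (fedcanon gF h N K B \<alpha> \<beta> z0 c0 (\<lambda>t i k b. \<xi> t i k b \<omega>) t)))))\<^sup>2 = GTs (Xi \<omega>) t"
    if "t < T" for t \<omega>
    using z_Xi[of t \<omega>] that by (simp add: fedpath.Gt_def[OF fp])
  have step1: "(\<integral>\<^sup>+\<omega>. ennreal ((norm (Gmap h \<alpha> (fst (fedcanon gF h N K B \<alpha> \<beta> z0 c0 (\<lambda>t i k b. \<xi> t i k b \<omega>) t))
            (gF0 (fst (fedcanon gF h N K B \<alpha> \<beta> z0 c0 (\<lambda>t i k b. \<xi> t i k b \<omega>) t)))))\<^sup>2) \<partial>M)
      = (\<integral>\<^sup>+s. ennreal (GTs s t) \<partial>PS)" if t: "t < T" for t
  proof -
    have "(\<integral>\<^sup>+s. ennreal (GTs s t) \<partial>PS) = (\<integral>\<^sup>+s. ennreal (GTs s t) \<partial>distr M PS Xi)" by (simp only: Xi_distr)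
    also have "\<dots> = (\<integral>\<^sup>+\<omega>. ennreal (GTs (Xi \<omega>) t) \<partial>M)"
      by (rule nn_integral_distr[OF Xi_meas]) (use GT_meas[of t] t in simp)
    finally show ?thesis using Geq[OF t] by simp
  qed
  have iR: "integrable PS (\<lambda>s. RTs s t)" if "t < T" for t using RT_bound[OF that] by simp
  have iZ: "integrable PS (\<lambda>s. ZTs s t)" if "t < T" for t using ZT_bound[OF that] by simp
  have GT0: "GTs s t \<ge> 0" for s t by (simp add: fedpath.Gt_def[OF fp])
  have "(\<Sum>t<T. \<integral>\<^sup>+s. ennreal (GTs s t) \<partial>PS) = (\<integral>\<^sup>+s. (\<Sum>t<T. ennreal (GTs s t)) \<partial>PS)"
    using GT_meas by (intro nn_integral_sum[symmetric]) auto
  also have "\<dots> = (\<integral>\<^sup>+s. ennreal (\<Sum>t<T. GTs s t) \<partial>PS)" using GT0 by (simp add: sum_ennreal)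
  also have "\<dots> \<le> (\<integral>\<^sup>+s. ennreal (C0 + (\<Sum>t<T. RTs s t) / 8 + 50 * (\<Sum>t<T. ZTs s t)) \<partial>PS)"
  proof (intro nn_integral_mono ennreal_leI)
    fix s
    interpret F: fedpath h \<rho> \<alpha> L m F0 gF0 N K B f gf gF \<beta> Bh z0 c0 "sc s" by (rule fp)
    have "(\<Sum>t<T. GTs s t) \<le> 8 * ((F.Phi 0 - m) / \<alpha>) + 8 * F.Wt 0 + real T * Bh + (\<Sum>t<T. RTs s t) / 8 + 50 * (\<Sum>t<T. ZTs s t)"
      by (rule F.path_bound[OF h0])
    moreover have "F.Phi 0 = F0 z0 + real_of_ereal (h z0)" by (simp add: F.Phi_def F.Hr_def F.zz0)
    moreover have "F.Wt 0 = (1 / real N) * (\<Sum>i<N. (norm (gf i z0 + c0 i - gF0 z0))\<^sup>2)"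
      by (simp add: F.Wt_def F.ww_def F.zz0 F.cc0)
    ultimately show "(\<Sum>t<T. GTs s t) \<le> C0 + (\<Sum>t<T. RTs s t) / 8 + 50 * (\<Sum>t<T. ZTs s t)"
      unfolding C0_def by simp
  qed
  finally have calc: "(\<Sum>t<T. \<integral>\<^sup>+s. ennreal (GTs s t) \<partial>PS) \<le> (\<integral>\<^sup>+s. ennreal (C0 + (\<Sum>t<T. RTs s t) / 8 + 50 * (\<Sum>t<T. ZTs s t)) \<partial>PS)" .
  have eqI: "(\<integral>\<^sup>+s. ennreal (C0 + (\<Sum>t<T. RTs s t) / 8 + 50 * (\<Sum>t<T. ZTs s t)) \<partial>PS) = ennreal (\<integral>s. C0 + (\<Sum>t<T. RTs s t) / 8 + 50 * (\<Sum>t<T. ZTs s t) \<partial>PS)"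
  proof (rule nn_integral_eq_integral)
    show "integrable PS (\<lambda>s. C0 + (\<Sum>t<T. RTs s t) / 8 + 50 * (\<Sum>t<T. ZTs s t))"
      by (intro Bochner_Integration.integrable_add Bochner_Integration.integrable_divide Bochner_Integration.integrable_mult_right
          Bochner_Integration.integrable_sum PP.integrable_const) (auto simp: iR iZ)
    show "AE s in PS. 0 \<le> C0 + (\<Sum>t<T. RTs s t) / 8 + 50 * (\<Sum>t<T. ZTs s t)"
    proof (rule AE_I2)
      fix s
      interpret F: fedpath h \<rho> \<alpha> L m F0 gF0 N K B f gf gF \<beta> Bh z0 c0 "sc s" by (rule fp)
      have "(\<Sum>t<T. GTs s t) \<le> 8 * ((F.Phi 0 - m) / \<alpha>) + 8 * F.Wt 0 + real T * Bh + (\<Sum>t<T. RTs s t) / 8 + 50 * (\<Sum>t<T. ZTs s t)"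
        by (rule F.path_bound[OF h0])
      moreover have "F.Phi 0 = F0 z0 + real_of_ereal (h z0)" by (simp add: F.Phi_def F.Hr_def F.zz0)
      moreover have "F.Wt 0 = (1 / real N) * (\<Sum>i<N. (norm (gf i z0 + c0 i - gF0 z0))\<^sup>2)"
        by (simp add: F.Wt_def F.ww_def F.zz0 F.cc0)
      moreover have "0 \<le> (\<Sum>t<T. GTs s t)" using GT0 by (simp add: sum_nonneg)
      ultimately show "0 \<le> C0 + (\<Sum>t<T. RTs s t) / 8 + 50 * (\<Sum>t<T. ZTs s t)" unfolding C0_def by simp
    qed
  qed
  have I1: "(\<integral>s. C0 + (\<Sum>t<T. RTs s t) / 8 + 50 * (\<Sum>t<T. ZTs s t) \<partial>PS)
      = C0 + (\<Sum>t<T. (\<integral>s. RTs s t \<partial>PS)) / 8 + 50 * (\<Sum>t<T. (\<integral>s. ZTs s t \<partial>PS))"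
  proof -
    have a: "integrable PS (\<lambda>s. (\<Sum>t<T. RTs s t) / 8)"
      by (intro Bochner_Integration.integrable_divide Bochner_Integration.integrable_sum) (auto simp: iR)
    have b: "integrable PS (\<lambda>s. 50 * (\<Sum>t<T. ZTs s t))"
      by (intro Bochner_Integration.integrable_mult_right Bochner_Integration.integrable_sum) (auto simp: iZ)
    have "(\<integral>s. C0 + (\<Sum>t<T. RTs s t) / 8 + 50 * (\<Sum>t<T. ZTs s t) \<partial>PS)
        = (\<integral>s. C0 \<partial>PS) + (\<integral>s. (\<Sum>t<T. RTs s t) / 8 \<partial>PS) + (\<integral>s. 50 * (\<Sum>t<T. ZTs s t) \<partial>PS)"
      using a b by (simp add: Bochner_Integration.integral_add PP.integrable_const)
    also have "(\<integral>s. C0 \<partial>PS) = C0" by (simp add: PP.prob_space)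
    also have "(\<integral>s. (\<Sum>t<T. RTs s t) / 8 \<partial>PS) = (\<Sum>t<T. (\<integral>s. RTs s t \<partial>PS)) / 8"
      using iR by (simp add: Bochner_Integration.integral_sum)
    also have "(\<integral>s. 50 * (\<Sum>t<T. ZTs s t) \<partial>PS) = 50 * (\<Sum>t<T. (\<integral>s. ZTs s t \<partial>PS))"
      using iZ by (simp add: Bochner_Integration.integral_sum)
    finally show ?thesis .
  qed
  have I2: "C0 + (\<Sum>t<T. (\<integral>s. RTs s t \<partial>PS)) / 8 + 50 * (\<Sum>t<T. (\<integral>s. ZTs s t \<partial>PS)) \<le> C0 + real T * (\<sigma>\<^sup>2 / real B) / 8 + 50 * (real T * (\<sigma>\<^sup>2 / (real B * real K)))"
  proof -
    have "(\<Sum>t<T. (\<integral>s. RTs s t \<partial>PS)) \<le> (\<Sum>t<T. \<sigma>\<^sup>2 / real B)" using RT_bound by (intro sum_mono) auto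
    moreover have "(\<Sum>t<T. (\<integral>s. ZTs s t \<partial>PS)) \<le> (\<Sum>t<T. \<sigma>\<^sup>2 / (real B * real K))" using ZT_bound by (intro sum_mono) auto
    moreover have "(\<Sum>t<T. \<sigma>\<^sup>2 / real B) = real T * (\<sigma>\<^sup>2 / real B)" by simp
    moreover have "(\<Sum>t<T. \<sigma>\<^sup>2 / (real B * real K)) = real T * (\<sigma>\<^sup>2 / (real B * real K))" by simp
    ultimately have "(\<Sum>t<T. (\<integral>s. RTs s t \<partial>PS)) / 8 \<le> real T * (\<sigma>\<^sup>2 / real B) / 8"
      "50 * (\<Sum>t<T. (\<integral>s. ZTs s t \<partial>PS)) \<le> 50 * (real T * (\<sigma>\<^sup>2 / (real B * real K)))"
      by (auto intro: divide_right_mono mult_left_mono)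
    thus ?thesis by linarith
  qed
  have "ennreal (\<integral>s. C0 + (\<Sum>t<T. RTs s t) / 8 + 50 * (\<Sum>t<T. ZTs s t) \<partial>PS)
      \<le> ennreal (C0 + real T * (\<sigma>\<^sup>2 / real B) / 8 + 50 * (real T * (\<sigma>\<^sup>2 / (real B * real K))))"
    using I1 I2 by (intro ennreal_leI) linarith
  have "(\<Sum>t<T. \<integral>\<^sup>+s. ennreal (GTs s t) \<partial>PS) \<le> ennreal (C0 + real T * (\<sigma>\<^sup>2 / real B) / 8 + 50 * (real T * (\<sigma>\<^sup>2 / (real B * real K))))"
    using calc[unfolded eqI] \<open>ennreal (\<integral>s. _ \<partial>PS) \<le> _\<close> by (rule order_trans)
  thus ?thesis using step1 unfolding C0_def by simp
qed

end


theorem theorem1: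
  fixes N K B T :: nat
    and F :: "nat \<Rightarrow> 'a::euclidean_space \<Rightarrow> 'b \<Rightarrow> real"
    and gF :: "nat \<Rightarrow> 'a \<Rightarrow> 'b \<Rightarrow> 'a"
    and D :: "nat \<Rightarrow> 'b measure"
    and f :: "nat \<Rightarrow> 'a \<Rightarrow> real"
    and gf :: "nat \<Rightarrow> 'a \<Rightarrow> 'a"
    and h :: "'a \<Rightarrow> ereal"
    and L \<rho> Bh \<sigma> \<alpha> \<beta> :: real
    and z0 :: 'a and c0 :: "nat \<Rightarrow> 'a"
    and M :: "'m measure"
    and \<xi> :: "nat \<Rightarrow> nat \<Rightarrow> nat \<Rightarrow> nat \<Rightarrow> 'm \<Rightarrow> 'b"
  defines "gradf \<equiv> (\<lambda>x. (1 / real N) *\<^sub>R (\<Sum>i<N. gf i x))"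
    and "\<phi> \<equiv> (\<lambda>x. ereal ((1 / real N) * (\<Sum>i<N. f i x)) + h x)"
    and "\<phi>star \<equiv> (INF x. ereal ((1 / real N) * (\<Sum>i<N. f i x)) + h x)"
    and "\<delta> \<equiv> 1 / (1 - \<alpha> * \<rho>)\<^sup>2"
    and "E0 \<equiv> (1 / real N) * (\<Sum>i<N. (norm (gf i z0 + c0 i - (1 / real N) *\<^sub>R (\<Sum>j<N. gf j z0)))\<^sup>2)"
    and "z \<equiv> (\<lambda>t \<omega>. fst (fedcanon gF h N K B \<alpha> \<beta> z0 c0 (\<lambda>t i k b. \<xi> t i k b \<omega>) t))"
  assumes N: "N > 0" and K: "K > 0" and B: "B > 0" and T: "T \<ge> 1"
    and D_prob: "\<And>i. i < N \<Longrightarrow> prob_space (D i)"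
    and F_int: "\<And>i x. i < N \<Longrightarrow> integrable (D i) (F i x)"
    and f_def: "\<And>i x. i < N \<Longrightarrow> f i x = (\<integral>\<xi>'. F i x \<xi>' \<partial>D i)"
    and F_grad: "\<And>i x \<xi>'. i < N \<Longrightarrow> \<xi>' \<in> space (D i) \<Longrightarrow>
                   ((\<lambda>y. F i y \<xi>') has_derivative (\<lambda>v. inner (gF i x \<xi>') v)) (at x)"
    and gF_meas: "\<And>i. i < N \<Longrightarrow> (\<lambda>(x, \<xi>'). gF i x \<xi>') \<in> borel_measurable (borel \<Otimes>\<^sub>M D i)"
    and A1: "\<phi>star > -\<infinity>"
    and L_pos: "L > 0"
    and f_grad: "\<And>i x. i < N \<Longrightarrow> (f i has_derivative (\<lambda>v. inner (gf i x) v)) (at x)"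
    and A2_upper: "\<And>i x y. i < N \<Longrightarrow>
                     f i x - f i y - inner (gf i y) (x - y) \<le> L / 2 * (norm (x - y))\<^sup>2"
    and A2_lip: "\<And>i x y. i < N \<Longrightarrow> norm (gf i x - gf i y) \<le> L * norm (x - y)"
    and h_proper: "proper_fun h" and h_closed: "closed_fun h"
    and rho: "\<rho> \<ge> 0" and h_wc: "weakly_convex \<rho> h"
    and A3_Bh: "\<And>z' v. v \<in> subdiff h z' \<Longrightarrow> (norm v)\<^sup>2 \<le> Bh"
    and gF_unbiased: "\<And>i x. i < N \<Longrightarrow> integrable (D i) (gF i x) \<and> (\<integral>\<xi>'. gF i x \<xi>' \<partial>D i) = gf i x"
    and gF_var: "\<And>i x. i < N \<Longrightarrow>
                   (\<integral>\<^sup>+\<xi>'. ennreal ((norm (gF i x \<xi>' - gf i x))\<^sup>2) \<partial>D i) \<le> ennreal (\<sigma>\<^sup>2)"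
    and M_prob: "prob_space M"
    and \<xi>_meas: "\<And>t i k b. i < N \<Longrightarrow> \<xi> t i k b \<in> M \<rightarrow>\<^sub>M D i"
    and \<xi>_distr: "\<And>t i k b. i < N \<Longrightarrow> distr M (D i) (\<xi> t i k b) = D i"
    and \<xi>_indep: "prob_space.indep_vars M (\<lambda>(t, i, k, b). D i) (\<lambda>(t, i, k, b). \<xi> t i k b)
                    {(t, i, k, b). i < N \<and> k < K \<and> b < B}"
    and c0_sum: "(\<Sum>i<N. c0 i) = 0"
    and \<alpha>_pos: "\<alpha> > 0" and \<beta>_pos: "\<beta> > 0"
    and step1: "0 < \<alpha> * (\<rho> + L) + 4 * \<alpha>\<^sup>2 * L\<^sup>2"
    and step2: "\<alpha> * (\<rho> + L) + 4 * \<alpha>\<^sup>2 * L\<^sup>2 \<le> 1 / 2"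
    and step3: "192 * (6 + \<delta>) * \<beta>\<^sup>2 * (real K)\<^sup>2 * L\<^sup>2 \<le> 1"
  shows "ereal (1 / real T) *
           (\<Sum>t<T. enn2ereal (\<integral>\<^sup>+\<omega>. ennreal ((norm (Gmap h \<alpha> (z t \<omega>) (gradf (z t \<omega>))))\<^sup>2) \<partial>M))
         \<le> ereal (8 / (\<alpha> * real T)) * (\<phi> z0 - \<phi>star + ereal (\<alpha> * E0))
           + ereal (50 * \<sigma>\<^sup>2 / (real B * real K) + \<sigma>\<^sup>2 / (8 * real B) + Bh)"
proof -
  define fbar where "fbar = (\<lambda>x. (1 / real N) * (\<Sum>i<N. f i x))"
  have \<phi>star_eq: "\<phi>star = (INF x. ereal (fbar x) + h x)" unfolding \<phi>star_def fbar_def ..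
  obtain x0 where x0: "h x0 \<noteq> \<infinity>" using h_proper unfolding proper_fun_def by auto
  have hnm: "\<And>x. h x \<noteq> -\<infinity>" using h_proper unfolding proper_fun_def by auto
  have "\<phi>star \<le> ereal (fbar x0) + h x0" unfolding \<phi>star_eq by (rule INF_lower) simp
  moreover have "ereal (fbar x0) + h x0 < \<infinity>" using x0 hnm[of x0] by (cases "h x0") auto
  ultimately have "\<phi>star < \<infinity>" by (rule le_less_trans)
  then obtain m where m: "\<phi>star = ereal m" using A1 by (cases \<phi>star) auto
  have aRL: "\<alpha> * (\<rho> + L) \<le> 1 / 2"
  proof -
    have "0 \<le> 4 * \<alpha>\<^sup>2 * L\<^sup>2" by simp
    thus ?thesis using step2 by linarith
  qed
  have aL: "0 < \<alpha> * L" using \<alpha>_pos L_pos by simp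
  have ar0: "0 \<le> \<alpha> * \<rho>" using \<alpha>_pos rho by simp
  have "\<alpha> * (\<rho> + L) = \<alpha> * \<rho> + \<alpha> * L" by (simp add: algebra_simps)
  hence ar: "\<alpha> * \<rho> < 1" and aL1: "\<alpha> * L < 1" using aRL aL ar0 by linarith+
  have hlow: "h x \<ge> ereal (m - fbar x)" for x
  proof -
    have "ereal m \<le> ereal (fbar x) + h x" unfolding m[symmetric] \<phi>star_eq by (rule INF_lower) simp
    thus ?thesis using hnm[of x] by (cases "h x") auto
  qed
  have F0up: "fbar x \<le> fbar y + inner (gradf y) (x - y) + L / 2 * (norm (x - y))\<^sup>2" for x y
  proof -
    have "(\<Sum>i<N. f i x - f i y - inner (gf i y) (x - y)) \<le> (\<Sum>i<N. L / 2 * (norm (x - y))\<^sup>2)"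
      using A2_upper by (intro sum_mono) auto
    hence "(\<Sum>i<N. f i x) - (\<Sum>i<N. f i y) - inner (\<Sum>i<N. gf i y) (x - y) \<le> real N * (L / 2 * (norm (x - y))\<^sup>2)"
      by (simp add: sum_subtractf inner_sum_left)
    hence "(1 / real N) * ((\<Sum>i<N. f i x) - (\<Sum>i<N. f i y) - inner (\<Sum>i<N. gf i y) (x - y)) \<le> (1 / real N) * (real N * (L / 2 * (norm (x - y))\<^sup>2))"
      by (intro mult_left_mono) auto
    thus ?thesis using N unfolding fbar_def gradf_def by (simp add: algebra_simps inner_sum_left)
  qed
  have ps: "proxsetup h \<rho> \<alpha> L m fbar gradf"
    by (unfold_locales) (use h_proper h_closed h_wc \<alpha>_pos rho ar L_pos aL1 hlow F0up in auto)
  have \<delta>1: "\<delta> \<ge> 1"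
  proof -
    have p: "0 < 1 - \<alpha> * \<rho>" "1 - \<alpha> * \<rho> \<le> 1" using ar ar0 by auto
    hence "(1 - \<alpha> * \<rho>)\<^sup>2 \<le> 1" by (simp add: power_le_one)
    moreover have "(1 - \<alpha> * \<rho>)\<^sup>2 > 0" using p by simp
    ultimately show ?thesis unfolding \<delta>_def by simp
  qed
  have st3: "1344 * \<beta>\<^sup>2 * (real K)\<^sup>2 * L\<^sup>2 \<le> 1"
  proof -
    have "1344 * (\<beta>\<^sup>2 * (real K)\<^sup>2 * L\<^sup>2) \<le> (192 * (6 + \<delta>)) * (\<beta>\<^sup>2 * (real K)\<^sup>2 * L\<^sup>2)"
      using \<delta>1 by (intro mult_right_mono) auto
    thus ?thesis using step3 by (simp add: mult.assoc)
  qed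
  have fp: "fedpath h \<rho> \<alpha> L m fbar gradf N K B f gf \<beta> Bh c0"
    unfolding fedpath_def fedpath_axioms_def
    using ps fbar_def gradf_def N K B \<beta>_pos L_pos A2_upper A2_lip A3_Bh step2 st3 c0_sum by auto
  have fpr: "fedprob h \<rho> \<alpha> L m fbar gradf N K B f gf gF \<beta> Bh c0 T \<sigma> D M \<xi>"
    unfolding fedprob_def using fp T D_prob gF_meas gF_unbiased gF_var M_prob \<xi>_meas \<xi>_distr \<xi>_indep by auto
  have E0eq: "E0 = (1 / real N) * (\<Sum>i<N. (norm (gf i z0 + c0 i - gradf z0))\<^sup>2)"
    unfolding E0_def gradf_def ..
  have \<phi>z0: "\<phi> z0 = ereal (fbar z0) + h z0" unfolding \<phi>_def fbar_def ..
  have pos8: "8 / (\<alpha> * real T) > 0" using \<alpha>_pos T by simp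
  show ?thesis
  proof (cases "h z0 = \<infinity>")
    case True
    have "\<phi> z0 - \<phi>star + ereal (\<alpha> * E0) = \<infinity>" unfolding \<phi>z0 m True by simp
    hence inf: "ereal (8 / (\<alpha> * real T)) * (\<phi> z0 - \<phi>star + ereal (\<alpha> * E0)) = \<infinity>" using pos8 \<alpha>_pos T by simp
    show ?thesis by (subst inf) simp
  next
    case False
    then obtain hz where hz: "h z0 = ereal hz" using hnm[of z0] by (cases "h z0") auto
    note MB = fedprob.main_bound[OF fpr False]
    define C where "C = 8 * ((fbar z0 + real_of_ereal (h z0) - m) / \<alpha>)
        + 8 * ((1 / real N) * (\<Sum>i<N. (norm (gf i z0 + c0 i - gradf z0))\<^sup>2)) + real T * Bh
        + real T * (\<sigma>\<^sup>2 / real B) / 8 + 50 * (real T * (\<sigma>\<^sup>2 / (real B * real K)))"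
    have Bh0: "Bh \<ge> 0" by (rule fedpath.Bh_nonneg[OF fp])
    have mle: "m \<le> fbar z0 + hz" using hlow[of z0] hz by simp
    have C0: "C \<ge> 0" unfolding C_def hz using mle \<alpha>_pos Bh0 N B K by (intro add_nonneg_nonneg mult_nonneg_nonneg divide_nonneg_pos sum_nonneg) auto
    let ?G = "\<lambda>t. \<integral>\<^sup>+\<omega>. ennreal ((norm (Gmap h \<alpha> (z t \<omega>) (gradf (z t \<omega>))))\<^sup>2) \<partial>M"
    have sumle: "(\<Sum>t<T. ?G t) \<le> ennreal C" using MB unfolding C_def z_def by simp
    have "(\<Sum>t<T. enn2ereal (?G t)) = enn2ereal (\<Sum>t<T. ?G t)" by (rule sum_enn2ereal) simp
    also have "\<dots> \<le> enn2ereal (ennreal C)" using sumle by (simp add: less_eq_ennreal.rep_eq)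
    also have "\<dots> = ereal C" using C0 by (rule enn2ereal_ennreal)
    finally have L1: "(\<Sum>t<T. enn2ereal (?G t)) \<le> ereal C" .
    have "ereal (1 / real T) * (\<Sum>t<T. enn2ereal (?G t)) \<le> ereal (1 / real T) * ereal C"
      using L1 by (intro ereal_mult_left_mono) auto
    also have "ereal (1 / real T) * ereal C = ereal (8 / (\<alpha> * real T)) * (\<phi> z0 - \<phi>star + ereal (\<alpha> * E0))
           + ereal (50 * \<sigma>\<^sup>2 / (real B * real K) + \<sigma>\<^sup>2 / (8 * real B) + Bh)"
      unfolding \<phi>z0 m hz E0eq C_def using T \<alpha>_pos B K by (simp add: field_simps)
    finally show ?thesis .
  qed
qed


end
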